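(* Let $p$ be an odd prime, $q$ a power of $p$, $\xi$ a generator of $\mathbb F_q^*$, $\ell$ an odd prime with $\ell\ne p$ and $\ell\mid q-1$, and $m,n$ positive integers. Let $\ell^u$ exactly divide $q-1$, $v=\min\{m,u\}$, $\zeta=\xi^{(q-1)/\ell^v}$, and let $C$ be a $\lambda$-constacyclic code of length $2\ell^mp^n$ over $\mathbb F_q$, $\lambda\in\mathbb F_q^*$. Empty products are $1$. (I) If $c_1\in\mathbb F_q^*$, $c_1^{2\ell^mp^n}\lambda=1$ and $C=\big\langle\prod_{i=0}^{\ell^v-1}(X-c_1^{-1}\zeta^i)^{\varepsilon_i}(X+c_1^{-1}\zeta^i)^{\epsilon_i}\prod_{j=1}^{m-u}\prod_{1\le k\le\ell^v,\,\ell\nmid k}(X^{\ell^j}-c_1^{-\ell^j}\zeta^k)^{\tau_k^j}(X^{\ell^j}+c_1^{-\ell^j}\zeta^k)^{\sigma_k^j}\big\rangle$ with all exponents in $[0,p^n]$, then $$C^\perp=\Big\langle\prod_{i=0}^{\ell^v-1}(X-c_1\zeta^{-i})^{p^n-\varepsilon_i}(X+c_1\zeta^{-i})^{p^n-\epsilon_i}\prod_{j=1}^{m-u}\prod_{\substack{k=1\\\ell\nmid k}}^{\ell^v}(X^{\ell^j}-c_1^{\ell^j}\zeta^{-k})^{p^n-\tau_k^j}(X^{\ell^j}+c_1^{\ell^j}\zeta^{-k})^{p^n-\sigma_k^j}\Big\rangle.$$ (II.A) If $m\le u$, $c_2\in\mathbb F_q^*$, $c_2^{2\ell^mp^n}\lambda=\xi^{\ell^vp^n}$,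 $\alpha=\xi^{(q-1)/\ell^m}$ and $C=\langle\prod_{i=0}^{\ell^m-1}(X^2-c_2^{-2}\xi\alpha^i)^{\varepsilon_i}\rangle$ with $0\le\varepsilon_i\le p^n$, then $C^\perp=\langle\prod_{i=0}^{\ell^m-1}(X^2-c_2^{2}\xi^{-1}\alpha^{-i})^{p^n-\varepsilon_i}\rangle$. (II.B) If $m>u$, $c_2\in\mathbb F_q^*$, $c_2^{2\ell^mp^n}\lambda=\xi^{\ell^vp^n}$, $\beta$ is the element of $\langle\xi^{\ell^u}\rangle$ with $\beta^{\ell^m}\xi^{\ell^u}=1$, and $C=\big\langle\prod_{i=0}^{\ell^u-1}(X^2-c_2^{-2}\beta^{-1}\zeta^i)^{\varepsilon_i}\prod_{j=1}^{m-u}\prod_{1\le k\le\ell^u,\,\ell\nmid k}(X^{2\ell^j}-c_2^{-2\ell^j}\beta^{-\ell^j}\zeta^k)^{\sigma_k^j}\big\rangle$ with exponents in $[0,p^n]$, then $$C^\perp=\Big\langle\prod_{i=0}^{\ell^u-1}(X^2-c_2^{2}\beta\zeta^{-i})^{p^n-\varepsilon_i}\prod_{j=1}^{m-u}\prod_{\substack{k=1\\\ell\nmid k}}^{\ell^u}(X^{2\ell^j}-c_2^{2\ell^j}\beta^{\ell^j}\zeta^{-k})^{p^n-\sigma_k^j}\Big\rangle.$$ (III) Suppose $1\le j\le 2\ell^v-1$, $j\ne\ell^v$, $d_1\in\mathbb F_q^*$ with $d_1^{2\ell^mp^n}\lambda=\xi^{jp^n}$, $j=y\ell^z$ with $\gcd(y,\ell)=1$,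 $0\le z\le v-1$, and $\delta=\xi^{(q-1)/\ell^z}$. (III.A) If $y$ is odd and $C=\langle\prod_{i=0}^{\ell^z-1}(X^{2\ell^{m-z}}-d_1^{-2\ell^{m-z}}\delta^i\xi^y)^{\varepsilon_i}\rangle$ with $0\le\varepsilon_i\le p^n$, then $C^\perp=\langle\prod_{i=0}^{\ell^z-1}(X^{2\ell^{m-z}}-d_1^{2\ell^{m-z}}\delta^{-i}\xi^{-y})^{p^n-\varepsilon_i}\rangle$. (III.B) If $y=2y_0$ and $C=\langle\prod_{i=0}^{\ell^z-1}(X^{\ell^{m-z}}-d_1^{-\ell^{m-z}}\delta^i\xi^{y_0})^{\varepsilon_i}(X^{\ell^{m-z}}+d_1^{-\ell^{m-z}}\delta^i\xi^{y_0})^{\epsilon_i}\rangle$ with $0\le\varepsilon_i,\epsilon_i\le p^n$, then $C^\perp=\langle\prod_{i=0}^{\ell^z-1}(X^{\ell^{m-z}}-d_1^{\ell^{m-z}}\delta^{-i}\xi^{-y_0})^{p^n-\varepsilon_i}(X^{\ell^{m-z}}+d_1^{\ell^{m-z}}\delta^{-i}\xi^{-y_0})^{p^n-\epsilon_i}\rangle$. In each case $C^\perp$ is a $\lambda^{-1}$-constacyclic code.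
   Context: For $\mu\in\mathbb F_q^*$, a $\mu$-constacyclic code of length $N$ over $\mathbb F_q$ is a linear subspace of $\mathbb F_q^N$ closed under $(c_0,\dots,c_{N-1})\mapsto(\mu c_{N-1},c_0,\dots,c_{N-2})$; such codes are identified with ideals of $\mathbb F_q[X]/\langle X^N-\mu\rangle$, and $\langle g(X)\rangle$ denotes the ideal generated by the image of $g(X)$ (in the corresponding quotient ring; for $C^\perp$ the ring is $\mathbb F_q[X]/\langle X^N-\lambda^{-1}\rangle$). $C^\perp$ is the dual code with respect to the standard Euclidean inner product on $\mathbb F_q^N$. $\langle\xi^k\rangle$ denotes the subgroup of $\mathbb F_q^*$ generated by $\xi^k$. *)

theory Defs
  imports "HOL-Computational_Algebra.Computational_Algebra" "HOL-Library.Cardinality"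
begin

text \<open>Codewords (c_0,...,c_{N-1}) in F_q^N are identified with polynomials
  c_0 + c_1 X + ... + c_{N-1} X^(N-1) of degree < N, i.e. with the canonical
  representatives of F_q[X]/<X^N - mu>.\<close>

definition words :: "nat \<Rightarrow> 'a::field poly set" where
  "words N = {c. degree c < N}"

definition cmod :: "nat \<Rightarrow> 'a::field \<Rightarrow> 'a poly" where
  "cmod N mu = monom 1 N - [:mu:]"

definition gen_ideal :: "nat \<Rightarrow> 'a::field \<Rightarrow> 'a poly \<Rightarrow> 'a poly set" where
  "gen_ideal N mu g = {(f * g) mod cmod N mu | f. True}"

text \<open>mu-constacyclic code of length N: a linear subspace of F_q^N closed under
  the constacyclic shift (c_0,...,c_{N-1}) |-> (mu c_{N-1}, c_0, ..., c_{N-2}),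
  which on representatives is c |-> X*c mod (X^N - mu).\<close>
definition constacyclic :: "nat \<Rightarrow> 'a::field \<Rightarrow> 'a poly set \<Rightarrow> bool" where
  "constacyclic N mu C \<longleftrightarrow> C \<subseteq> words N \<and> 0 \<in> C \<and>
     (\<forall>a\<in>C. \<forall>b\<in>C. a + b \<in> C) \<and> (\<forall>r. \<forall>a\<in>C. smult r a \<in> C) \<and>
     (\<forall>a\<in>C. (monom 1 1 * a) mod cmod N mu \<in> C)"

definition dual_code :: "nat \<Rightarrow> 'a::field poly set \<Rightarrow> 'a poly set" where
  "dual_code N C = {c \<in> words N. \<forall>d\<in>C. (\<Sum>i<N. coeff c i * coeff d i) = 0}"

definition is_generator :: "'a::field \<Rightarrow> bool" where
  "is_generator xi \<longleftrightarrow> xi \<noteq> 0 \<and> (\<forall>x. x \<noteq> 0 \<longrightarrow> (\<exists>k::nat. x = xi ^ k))"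

end

theory Submission
  imports Defs "HOL-Number_Theory.Residues"
begin

hide_const (open) UnivPoly.monom UnivPoly.coeff Module.module.smult


lemma ip_lemma:
  fixes c d :: "'a::field poly"
  assumes "degree c < N" "degree d < N"
  shows "(\<Sum>i<N. coeff c i * coeff d i) = coeff (c * reflect_poly d) (degree d)"
proof -
  have "coeff (c * reflect_poly d) (degree d) = (\<Sum>i\<le>degree d. coeff c i * coeff d i)"
    unfolding coeff_mult
    by (intro sum.cong) (auto simp: coeff_reflect_poly)
  also have "\<dots> = (\<Sum>i<N. coeff c i * coeff d i)"
    using assms by (intro sum.mono_neutral_left) (auto simp: coeff_eq_0)
  finally show ?thesis by simp
qed

lemma degree_cmod: "N > 0 \<Longrightarrow> degree (cmod N (mu::'a::field)) = N"
  by (rule antisym) (auto intro!: degree_le le_degree simp: cmod_def coeff_monom coeff_pCons')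

lemma gen_ideal_char:
  fixes g :: "'a::field poly"
  assumes N: "N > 0" and dv: "g dvd cmod N mu"
  shows "gen_ideal N mu g = {c. degree c < N \<and> g dvd c}"
proof -
  have degF: "degree (cmod N mu) = N" using N by (rule degree_cmod)
  have F0: "cmod N mu \<noteq> 0" using degF N by auto
  show ?thesis
  proof (intro Set.set_eqI iffI)
    fix c assume "c \<in> gen_ideal N mu g"
    then obtain f where c: "c = (f * g) mod cmod N mu" by (auto simp: gen_ideal_def)
    have "degree c < N" using degree_mod_less[OF F0, of "f*g"] degF N c by auto
    moreover have "g dvd c" unfolding c using dv by (simp add: dvd_mod_iff)
    ultimately show "c \<in> {c. degree c < N \<and> g dvd c}" by simp
  next
    fix c assume "c \<in> {c. degree c < N \<and> g dvd c}"
    then obtain e where d: "degree c < N" and e: "c = g * e" by (auto elim: dvdE)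
    have "c = (e * g) mod cmod N mu"
      using d degF e by (simp add: mod_poly_less mult.commute)
    then show "c \<in> gen_ideal N mu g" by (auto simp: gen_ideal_def)
  qed
qed

lemma reflect_cmod:
  assumes "N > 0" "(mu::'a::field) \<noteq> 0"
  shows "reflect_poly (cmod N mu) = smult (- mu) (cmod N (inverse mu))"
proof -
  have degF: "degree (cmod N mu) = N" using assms by (simp add: degree_cmod)
  show ?thesis
    by (rule poly_eqI) (use assms degF in \<open>auto simp: coeff_reflect_poly cmod_def coeff_monom coeff_pCons'\<close>)
qed

lemma reflect_monom_mult: "reflect_poly (monom 1 k * (g::'a::field poly)) = reflect_poly g"
proof -
  have "reflect_poly (monom (1::'a) k) = 1"
    by (rule poly_eqI) (auto simp: coeff_reflect_poly coeff_monom degree_monom_eq)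
  then show ?thesis by (simp add: reflect_poly_mult)
qed

theorem dual_gen:
  fixes g h :: "'a::field poly"
  assumes N: "N > 0" and lam: "lam \<noteq> 0" and gh: "g * h = cmod N lam"
  shows "dual_code N (gen_ideal N lam g) = gen_ideal N (inverse lam) (reflect_poly h)"
proof -
  define F where "F = cmod N lam"
  have degF: "degree F = N" using N by (simp add: F_def degree_cmod)
  have F0: "F \<noteq> 0" using degF N by auto
  have g0: "g \<noteq> 0" and h0: "h \<noteq> 0" using F0 gh by (auto simp: F_def)
  have "coeff F 0 = - lam" using N by (simp add: F_def cmod_def coeff_monom)
  then have "coeff g 0 * coeff h 0 = - lam" using gh by (simp add: F_def flip: coeff_mult_0)
  then have h00: "coeff h 0 \<noteq> 0" using lam by auto
  define r where "r = degree g"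
  have dgh: "degree g + degree h = N" using degF gh g0 h0 unfolding F_def
    by (metis degree_mult_eq)
  have dh: "degree h = N - r" "r \<le> N" using dgh unfolding r_def by auto
  define hs where "hs = reflect_poly h"
  define gs where "gs = reflect_poly g"
  have dhs: "degree hs = N - r" using dh h00 by (simp add: hs_def)
  have gshs: "gs * hs = smult (- lam) (cmod N (inverse lam))"
    unfolding gs_def hs_def using reflect_cmod[OF N lam] gh by (simp flip: reflect_poly_mult)
  have Fs: "gs * hs = 1 - smult lam (monom 1 N)"
    unfolding gshs using lam N
    by (rule_tac poly_eqI) (simp add: cmod_def coeff_monom coeff_pCons')
  have hsdvd: "hs dvd cmod N (inverse lam)"
  proof -
    have "cmod N (inverse lam) = gs * hs * [:- inverse lam:]" using lam unfolding gshs by simp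
    then show ?thesis by (metis dvd_triv_right mult.commute mult.left_commute)
  qed
  have L: "gen_ideal N lam g = {d. degree d < N \<and> g dvd d}"
    by (rule gen_ideal_char[OF N]) (metis gh dvd_triv_left)
  have R: "gen_ideal N (inverse lam) hs = {c. degree c < N \<and> hs dvd c}"
    by (rule gen_ideal_char[OF N hsdvd])
  show ?thesis
    unfolding hs_def[symmetric] L R dual_code_def words_def
  proof (intro Set.set_eqI iffI; clarsimp)
    fix c assume dc: "degree c < N" and orth: "\<forall>d. degree d < N \<and> g dvd d \<longrightarrow>
        (\<Sum>i<N. coeff c i * coeff d i) = 0"
    define Q where "Q = c * gs"
    have Qz: "coeff Q i = 0" if "r \<le> i" "i < N" for i
    proof -
      define d where "d = monom 1 (i - r) * g"
      have dd: "degree d = i" using that g0 by (simp add: d_def degree_mult_eq degree_monom_eq r_def)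
      have "(\<Sum>i<N. coeff c i * coeff d i) = 0" using orth dd that by (auto simp: d_def)
      then show ?thesis using ip_lemma[OF dc, of d] dd that
        by (simp add: Q_def gs_def d_def reflect_monom_mult)
    qed
    define A where "A = poly_cutoff r Q"
    define B where "B = Q - A"
    have Bz: "coeff B i = 0" if "i < N" for i
      using Qz[of i] that by (auto simp: B_def A_def coeff_poly_cutoff)
    have eq: "c * (1 - smult lam (monom 1 N)) = A * hs + B * hs"
      by (simp add: B_def Q_def flip: Fs) (simp add: algebra_simps)
    have degA: "degree (A * hs) < N"
    proof (cases "A = 0")
      case False
      have "r > 0"
      proof (rule ccontr)
        assume "\<not> r > 0"
        then have "A = 0" by (intro poly_eqI) (auto simp: A_def coeff_poly_cutoff)
        with False show False by simp
      qed
      have "degree A \<le> r - 1"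
        by (rule degree_le) (auto simp: A_def coeff_poly_cutoff)
      then have "degree (A * hs) \<le> r - 1 + (N - r)"
        using degree_mult_le[of A hs] dhs by linarith
      then show ?thesis using \<open>r > 0\<close> dh by linarith
    qed (use N in simp)
    have "c = A * hs"
    proof (rule poly_eqI)
      fix i
      show "coeff c i = coeff (A * hs) i"
      proof (cases "i < N")
        case True
        have "coeff (B * hs) i = 0"
          unfolding coeff_mult using True by (intro sum.neutral) (auto simp: Bz)
        moreover have "coeff (c * (1 - smult lam (monom 1 N))) i = coeff c i"
        proof -
          have "coeff (c * monom 1 N) i = 0" using True
            by (simp add: mult.commute[of c] coeff_monom_mult)
          then show ?thesis by (simp add: right_diff_distrib)
        qed
        ultimately show ?thesis using arg_cong[OF eq, of "\<lambda>p. coeff p i"] by simp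
      next
        case False
        then show ?thesis using dc degA by (simp add: coeff_eq_0)
      qed
    qed
    then show "hs dvd c" by simp
  next
    fix c d assume dc: "degree c < N" and hc: "hs dvd c" and dd: "degree d < N" and gd: "g dvd d"
    show "(\<Sum>i<N. coeff c i * coeff d i) = 0"
    proof (cases "d = 0 \<or> c = 0")
      case True then show ?thesis by auto
    next
      case False
      then have d0: "d \<noteq> 0" and c0: "c \<noteq> 0" by auto
      obtain a where a: "c = hs * a" using hc by (auto elim: dvdE)
      obtain e where e: "d = g * e" using gd by (auto elim: dvdE)
      have a0: "a \<noteq> 0" and e0: "e \<noteq> 0" using a e c0 d0 by auto
      have D: "degree d = r + degree e" using e g0 e0 by (simp add: degree_mult_eq r_def)
      have hs0: "hs \<noteq> 0" using h0 by (simp add: hs_def)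
      have "degree c = degree hs + degree a" using a a0 hs0 by (simp add: degree_mult_eq)
      then have da: "degree a < r" using dc dhs dh by linarith
      have des: "degree (reflect_poly e) \<le> degree e" by (rule degree_reflect_poly_le)
      have "c * reflect_poly d = (a * reflect_poly e) * (gs * hs)"
        by (simp add: a e gs_def reflect_poly_mult algebra_simps)
      also have "\<dots> = a * reflect_poly e - monom lam N * (a * reflect_poly e)"
        unfolding Fs by (simp add: algebra_simps smult_monom)
      finally have "coeff (c * reflect_poly d) (degree d) = coeff (a * reflect_poly e) (degree d)"
        using dd by (simp add: coeff_monom_mult)
      also have "\<dots> = 0"
      proof (rule coeff_eq_0)
        have "degree (a * reflect_poly e) \<le> degree a + degree (reflect_poly e)"
          by (rule degree_mult_le)
        then show "degree (a * reflect_poly e) < degree d" using D da des by linarith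
      qed
      finally show ?thesis using ip_lemma[OF dc dd] by simp
    qed
  qed
qed



lemma gen_ideal_smult:
  assumes "(s::'a::field) \<noteq> 0"
  shows "gen_ideal N mu (smult s T) = gen_ideal N mu T"
proof (intro Set.set_eqI iffI)
  fix c assume "c \<in> gen_ideal N mu (smult s T)"
  then obtain f where "c = (f * smult s T) mod cmod N mu" by (auto simp: gen_ideal_def)
  then have "c = (smult s f * T) mod cmod N mu" by (simp add: mult_smult_right mult_smult_left)
  then show "c \<in> gen_ideal N mu T" unfolding gen_ideal_def by blast
next
  fix c assume "c \<in> gen_ideal N mu T"
  then obtain f where "c = (f * T) mod cmod N mu" by (auto simp: gen_ideal_def)
  moreover have "smult (inverse s) f * smult s T = f * T" using assms
    by (simp add: mult_smult_right mult_smult_left)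
  ultimately have "c = (smult (inverse s) f * smult s T) mod cmod N mu" by simp
  then show "c \<in> gen_ideal N mu (smult s T)" unfolding gen_ideal_def by blast
qed

lemma constacyclic_gen_ideal:
  assumes N: "N > 0"
  shows "constacyclic N mu (gen_ideal N (mu::'a::field) T)"
proof -
  have degF: "degree (cmod N mu) = N" using N by (rule degree_cmod)
  have F0: "cmod N mu \<noteq> 0" using degF N by auto
  show ?thesis unfolding constacyclic_def
  proof (intro conjI ballI allI)
    show "gen_ideal N mu T \<subseteq> words N"
    proof
      fix c assume "c \<in> gen_ideal N mu T"
      then obtain f where c: "c = (f * T) mod cmod N mu" by (auto simp: gen_ideal_def)
      show "c \<in> words N" using degree_mod_less[OF F0, of "f*T"] degF N c
        by (auto simp: words_def)
    qed
    show "0 \<in> gen_ideal N mu T" unfolding gen_ideal_def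
      by (rule CollectI, rule exI[of _ 0]) simp
    fix a b assume "a \<in> gen_ideal N mu T" "b \<in> gen_ideal N mu T"
    then obtain f1 f2 where "a = (f1 * T) mod cmod N mu" "b = (f2 * T) mod cmod N mu"
      by (auto simp: gen_ideal_def)
    then have "a + b = ((f1 + f2) * T) mod cmod N mu" by (simp add: poly_mod_add_left distrib_right)
    then show "a + b \<in> gen_ideal N mu T" by (auto simp: gen_ideal_def)
  next
    fix r a assume "a \<in> gen_ideal N mu T"
    then obtain f where "a = (f * T) mod cmod N mu" by (auto simp: gen_ideal_def)
    then have "smult r a = (smult r f * T) mod cmod N mu" by (simp add: mod_smult_left)
    then show "smult r a \<in> gen_ideal N mu T" unfolding gen_ideal_def by blast
  next
    fix a assume "a \<in> gen_ideal N mu T"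
    then obtain f where "a = (f * T) mod cmod N mu" by (auto simp: gen_ideal_def)
    then have "(monom 1 1 * a) mod cmod N mu = ((monom 1 1 * f) * T) mod cmod N mu"
      by (simp add: mod_mult_right_eq mult.assoc)
    then show "(monom 1 1 * a) mod cmod N mu \<in> gen_ideal N mu T" by (auto simp: gen_ideal_def)
  qed
qed

definition reflrel :: "'a::field poly \<Rightarrow> 'a poly \<Rightarrow> bool" where
  "reflrel h T \<longleftrightarrow> (\<exists>s. s \<noteq> 0 \<and> reflect_poly h = smult s T)"

lemma reflrel_mult: "reflrel h1 T1 \<Longrightarrow> reflrel h2 T2 \<Longrightarrow> reflrel (h1 * h2) (T1 * T2)"
  unfolding reflrel_def
proof (elim exE conjE)
  fix s1 s2 assume "s1 \<noteq> 0" "reflect_poly h1 = smult s1 T1" "s2 \<noteq> 0" "reflect_poly h2 = smult s2 T2"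
  then show "\<exists>s. s \<noteq> 0 \<and> reflect_poly (h1 * h2) = smult s (T1 * T2)"
    by (intro exI[of _ "s1 * s2"]) (simp add: reflect_poly_mult mult.commute)
qed

lemma reflrel_power: "reflrel h T \<Longrightarrow> reflrel (h ^ n) (T ^ n)"
  unfolding reflrel_def
proof (elim exE conjE)
  fix s1 assume "s1 \<noteq> 0" "reflect_poly h = smult s1 T"
  then show "\<exists>s. s \<noteq> 0 \<and> reflect_poly (h ^ n) = smult s (T ^ n)"
    by (intro exI[of _ "s1 ^ n"]) (simp add: reflect_poly_power smult_power)
qed

lemma reflrel_one: "reflrel 1 1"
  unfolding reflrel_def by (auto intro!: exI[of _ 1])

lemma reflrel_prod: "(\<And>i. i \<in> A \<Longrightarrow> reflrel (h i) (T i)) \<Longrightarrow> reflrel (prod h A) (prod T A)"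
proof (induction A rule: infinite_finite_induct)
  case (insert x F)
  then show ?case by (simp add: reflrel_mult)
qed (auto simp: reflrel_one)

lemma reflrel_lin_minus:
  assumes "(a::'a::field) \<noteq> 0"
  shows "reflrel [:- a, 1:] [:- inverse a, 1:]"
  unfolding reflrel_def using assms
  by (intro exI[of _ "- a"]) (auto simp: reflect_poly_pCons)

lemma reflrel_lin_plus:
  assumes "(a::'a::field) \<noteq> 0"
  shows "reflrel [:a, 1:] [:inverse a, 1:]"
  unfolding reflrel_def using assms
  by (intro exI[of _ "a"]) (auto simp: reflect_poly_pCons)

lemma reflrel_monom_minus:
  assumes "(a::'a::field) \<noteq> 0" "L > 0"
  shows "reflrel (monom 1 L - [:a:]) (monom 1 L - [:inverse a:])"
proof -
  have d: "degree (monom 1 L - [:a:]) = L" using degree_cmod[OF assms(2), of a] by (simp add: cmod_def)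
  show ?thesis unfolding reflrel_def using assms
    apply (intro exI[of _ "- a"])
    apply (rule conjI, simp)
    apply (rule poly_eqI)
    apply (auto simp: d coeff_reflect_poly coeff_monom coeff_pCons')
    done
qed

lemma reflrel_monom_plus:
  assumes "(a::'a::field) \<noteq> 0" "L > 0"
  shows "reflrel (monom 1 L + [:a:]) (monom 1 L + [:inverse a:])"
proof -
  have d: "degree (monom 1 L + [:a:]) = L" using degree_cmod[OF assms(2), of "-a"]
    by (simp add: cmod_def diff_conv_add_uminus)
  show ?thesis unfolding reflrel_def using assms
    apply (intro exI[of _ "a"])
    apply (rule conjI, simp)
    apply (rule poly_eqI)
    apply (auto simp: d coeff_reflect_poly coeff_monom coeff_pCons')
    done
qed

theorem dual_final:
  fixes g h T :: "'a::field poly"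
  assumes N: "N > 0" and lam: "lam \<noteq> 0" and gh: "g * h = cmod N lam" and rr: "reflrel h T"
  shows "dual_code N (gen_ideal N lam g) = gen_ideal N (inverse lam) T
     \<and> constacyclic N (inverse lam) (dual_code N (gen_ideal N lam g))"
proof -
  obtain s where s: "s \<noteq> 0" "reflect_poly h = smult s T" using rr by (auto simp: reflrel_def)
  have "dual_code N (gen_ideal N lam g) = gen_ideal N (inverse lam) T"
    using dual_gen[OF N lam gh] s gen_ideal_smult by simp
  then show ?thesis using constacyclic_gen_ideal[OF N] by simp
qed




lemma char_eq:
  assumes p: "prime p" and q: "CARD('a::{finite,field}) = p ^ r"
  shows "CHAR('a) = p"
proof -
  have pos: "CHAR('a) > 0" by (rule finite_imp_CHAR_pos) simp
  have pr: "prime CHAR('a)" using pos prime_CHAR_semidom by blast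
  have "CHAR('a) dvd p ^ r" using CHAR_dvd_CARD[where 'a='a] q by simp
  then have "CHAR('a) dvd p" using pr prime_dvd_power by blast
  then show ?thesis using pr p by (simp add: primes_dvd_imp_eq)
qed

lemma const_power_poly: "[:c:] ^ k = [:c ^ k:]"
  by (induction k) (auto simp: one_pCons mult.commute)

lemma frob_poly:
  assumes ch: "CHAR('a::{finite,field}) = p" and p: "prime p" and odd: "odd p"
  shows "(monom (1::'a) M - [:c:]) ^ (p ^ n) = monom 1 (M * p ^ n) - [:c ^ (p ^ n):]"
proof -
  have pr: "prime CHAR('a poly)" using ch p by simp
  have "(monom (1::'a) M + (- [:c:])) ^ (p ^ n) = monom 1 M ^ (p ^ n) + (- [:c:]) ^ (p ^ n)"
    by (rule freshmans_dream'[OF pr]) (simp add: ch)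
  moreover have "odd (p ^ n)" using odd by simp
  ultimately have "(monom (1::'a) M + (- [:c:])) ^ (p ^ n) = monom 1 (M * p ^ n) + (- [:c ^ (p ^ n):])"
    by (simp add: monom_power const_power_poly power_minus_odd)
  then show ?thesis by (simp only: diff_conv_add_uminus)
qed

lemma nonzero_power_card:
  fixes x :: "'a::{finite,field}"
  assumes "x \<noteq> 0"
  shows "x ^ (CARD('a) - 1) = 1"
proof -
  have "(\<Prod>y\<in>UNIV-{0}. x * y) = x ^ card (UNIV - {0::'a}) * \<Prod>(UNIV-{0::'a})"
    by (simp add: prod.distrib)
  also have "card (UNIV - {0::'a}) = CARD('a) - 1" by (simp add: card_Diff_singleton)
  also have "(\<Prod>y\<in>UNIV-{0}. x * y) = (\<Prod>y\<in>UNIV-{0}. y)"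
    by (rule prod.reindex_bij_witness[of _ "\<lambda>y. y / x" "\<lambda>y. x * y"]) (use assms in auto)
  finally show ?thesis by simp
qed

definition ordr :: "'a::field \<Rightarrow> nat \<Rightarrow> bool" where
  "ordr w M \<longleftrightarrow> (\<forall>a. w ^ a = 1 \<longleftrightarrow> M dvd a)"

lemma gen_order:
  fixes xi :: "'a::{finite,field}"
  assumes g: "is_generator xi"
  shows "ordr xi (CARD('a) - 1)"
  unfolding ordr_def
proof (intro allI iffI)
  have xi0: "xi \<noteq> 0" using g by (simp add: is_generator_def)
  fix a
  assume dv: "(CARD('a) - 1) dvd a"
  then obtain t where "a = (CARD('a) - 1) * t" by blast
  then show "xi ^ a = 1" using nonzero_power_card[OF xi0] by (simp add: power_mult)
next
  have xi0: "xi \<noteq> 0" using g by (simp add: is_generator_def)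
  fix a assume a: "xi ^ a = 1"
  define Q where "Q = CARD('a) - 1"
  define r where "r = a mod Q"
  have xQ: "xi ^ Q = 1" using nonzero_power_card[OF xi0] by (simp add: Q_def)
  have "xi ^ a = xi ^ (Q * (a div Q) + r)" by (simp add: r_def)
  then have xr: "xi ^ r = 1" using a xQ by (simp add: power_add power_mult)
  have Qpos: "Q > 0"
  proof -
    have "card {0::'a, 1} \<le> CARD('a)" by (rule card_mono) auto
    then show ?thesis by (simp add: Q_def)
  qed
  show "Q dvd a"
  proof (rule ccontr)
    assume "\<not> Q dvd a"
    then have rpos: "r > 0" unfolding r_def by (metis dvd_eq_mod_eq_0 gr0I)
    have rQ: "r < Q" using Qpos by (simp add: r_def)
    have sub: "UNIV - {0::'a} \<subseteq> (\<lambda>k. xi ^ k) ` {..<r}"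
    proof
      fix x :: 'a assume "x \<in> UNIV - {0}"
      then obtain k where k: "x = xi ^ k" using g by (auto simp: is_generator_def)
      have "xi ^ k = xi ^ (r * (k div r) + k mod r)" by simp
      also have "\<dots> = (xi ^ r) ^ (k div r) * xi ^ (k mod r)" by (simp only: power_add power_mult)
      also have "\<dots> = xi ^ (k mod r)" using xr by simp
      finally show "x \<in> (\<lambda>k. xi ^ k) ` {..<r}" using k rpos by auto
    qed
    have "card (UNIV - {0::'a}) \<le> card ((\<lambda>k. xi ^ k) ` {..<r})"
      by (rule card_mono[OF _ sub]) simp
    also have "\<dots> \<le> r" using card_image_le[of "{..<r}" "\<lambda>k. xi ^ k"] by simp
    finally have "Q \<le> r" by (simp add: card_Diff_singleton Q_def)
    then show False using rQ by simp
  qed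
qed

lemma ordr_pow_div:
  assumes o: "ordr xi Q" and MQ: "M dvd Q" and Q: "Q > 0"
  shows "ordr (xi ^ (Q div M)) M"
  unfolding ordr_def
proof
  fix a
  obtain t where t: "Q = M * t" using MQ by blast
  have t0: "t > 0" using t Q by auto
  have M0: "M > 0" using t Q by auto
  have "(xi ^ (Q div M)) ^ a = 1 \<longleftrightarrow> Q dvd t * a"
    using o t M0 by (simp add: ordr_def flip: power_mult)
  also have "\<dots> \<longleftrightarrow> M dvd a" using t0 by (simp add: t mult.commute[of M])
  finally show "(xi ^ (Q div M)) ^ a = 1 \<longleftrightarrow> M dvd a" .
qed

lemma ordr_pow_coprime:
  assumes o: "ordr w M" and c: "coprime k M"
  shows "ordr (w ^ k) M"
  unfolding ordr_def
proof
  fix a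
  have "(w ^ k) ^ a = 1 \<longleftrightarrow> M dvd k * a" using o by (simp add: ordr_def flip: power_mult)
  also have "\<dots> \<longleftrightarrow> M dvd a" using c by (simp add: coprime_dvd_mult_right_iff coprime_commute)
  finally show "(w ^ k) ^ a = 1 \<longleftrightarrow> M dvd a" .
qed

lemma ordr_pow_dvd:
  assumes o: "ordr w (k * M)" and k: "k > 0"
  shows "ordr (w ^ k) M"
  unfolding ordr_def
proof
  fix a
  have "(w ^ k) ^ a = 1 \<longleftrightarrow> k * M dvd k * a" using o by (simp add: ordr_def flip: power_mult)
  also have "\<dots> \<longleftrightarrow> M dvd a" using k by simp
  finally show "(w ^ k) ^ a = 1 \<longleftrightarrow> M dvd a" .
qed

lemma roots_prod:
  fixes T :: "'a::field poly"
  assumes fin: "finite I" and inj: "inj_on f I" and roots: "\<And>i. i \<in> I \<Longrightarrow> poly T (f i) = 0"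
    and T0: "T \<noteq> 0"
  shows "(\<Prod>i\<in>I. [:- f i, 1:]) dvd T"
  using fin inj roots
proof (induction I rule: finite_induct)
  case empty then show ?case by simp
next
  case (insert x F)
  have "(\<Prod>i\<in>F. [:- f i, 1:]) dvd T" using insert by (auto simp: inj_on_insert)
  then obtain R where R: "T = (\<Prod>i\<in>F. [:- f i, 1:]) * R" by (auto elim: dvdE)
  have "poly (\<Prod>i\<in>F. [:- f i, 1:]) (f x) \<noteq> 0"
    using insert.prems insert.hyps by (auto simp: poly_prod inj_on_insert)
  moreover have "poly T (f x) = 0" using insert.prems by simp
  ultimately have "poly R (f x) = 0" using R by simp
  then have "[:- f x, 1:] dvd R" by (simp add: poly_eq_0_iff_dvd)
  then have "[:- f x, 1:] * (\<Prod>i\<in>F. [:- f i, 1:]) dvd (\<Prod>i\<in>F. [:- f i, 1:]) * R"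
    by (metis mult.commute mult_dvd_mono dvd_refl)
  moreover have "(\<Prod>i\<in>insert x F. [:- f i, 1:]) = [:- f x, 1:] * (\<Prod>i\<in>F. [:- f i, 1:])"
    using insert.hyps by simp
  ultimately show ?case using R by simp
qed

lemma monic_dvd_eq:
  fixes P T :: "'a::field poly"
  assumes "P dvd T" "T \<noteq> 0" "degree P = degree T" "lead_coeff P = 1" "lead_coeff T = 1"
  shows "P = T"
proof -
  obtain R where R: "T = P * R" using assms(1) by (auto elim: dvdE)
  have "P \<noteq> 0" "R \<noteq> 0" using R assms(2) by auto
  then have "degree R = 0" using R assms(3) by (simp add: degree_mult_eq)
  then obtain c where c: "R = [:c:]" by (metis degree_eq_zeroE)
  have "lead_coeff T = lead_coeff P * c" using R c by (simp add: lead_coeff_mult)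
  then have "c = 1" using assms by simp
  then show ?thesis using R c by (simp add: one_pCons)
qed



lemma ordr_inj:
  assumes o: "ordr w M" and M: "M > 0"
  shows "inj_on (\<lambda>i. w ^ i) {..<M}"
proof (rule inj_onI)
  have w0: "w \<noteq> 0"
  proof
    assume "w = 0"
    then have "w ^ M = 0" using M by simp
    moreover have "w ^ M = 1" using o by (simp add: ordr_def)
    ultimately show False by simp
  qed
  have key: "w ^ i \<noteq> w ^ j" if "i < j" "j < M" for i j
  proof
    assume "w ^ i = w ^ j"
    moreover have "w ^ j = w ^ i * w ^ (j - i)" using that by (simp flip: power_add)
    ultimately have "w ^ (j - i) = 1" using w0 by simp
    then have "M dvd (j - i)" using o by (simp add: ordr_def)
    moreover have "0 < j - i" "j - i < M" using that by auto
    ultimately show False by (simp add: nat_dvd_not_less)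
  qed
  fix i j assume "i \<in> {..<M}" "j \<in> {..<M}" "w ^ i = w ^ j"
  then show "i = j" using key[of i j] key[of j i] by (metis lessThan_iff linorder_neqE_nat)
qed

lemma P1:
  assumes o: "ordr (w::'a::field) M" and M: "M > 0"
  shows "(\<Prod>i<M. [:- (b * w ^ i), 1:]) = monom 1 M - [:b ^ M:]"
proof (cases "b = 0")
  case True
  then show ?thesis using M by (simp add: monom_altdef)
next
  case False
  have wM: "w ^ M = 1" using o by (simp add: ordr_def)
  have T0: "monom 1 M - [:b ^ M:] \<noteq> 0" using degree_cmod[OF M, of "b^M"] M
    by (auto simp: cmod_def)
  have dv: "(\<Prod>i<M. [:- (b * w ^ i), 1:]) dvd monom 1 M - [:b ^ M:]"
  proof (rule roots_prod)
    show "inj_on (\<lambda>i. b * w ^ i) {..<M}"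
      using ordr_inj[OF o M] False by (auto simp: inj_on_def)
    fix i
    have "(b * w ^ i) ^ M = b ^ M * (w ^ M) ^ i"
      by (simp add: power_mult_distrib flip: power_mult) (simp add: mult.commute)
    then have "(b * w ^ i) ^ M = b ^ M" using wM by simp
    then show "poly (monom 1 M - [:b ^ M:]) (b * w ^ i) = 0" by (simp add: poly_monom)
  qed (use T0 in auto)
  show ?thesis
  proof (rule monic_dvd_eq[OF dv T0])
    show "degree (\<Prod>i<M. [:- (b * w ^ i), 1:]) = degree (monom 1 M - [:b ^ M:])"
      using degree_cmod[OF M, of "b^M"] by (simp add: degree_prod_eq_sum_degree cmod_def)
    show "lead_coeff (\<Prod>i<M. [:- (b * w ^ i), 1:]) = 1" by (simp add: lead_coeff_prod)
    show "lead_coeff (monom 1 M - [:b ^ M:]) = (1::'a)"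
      using degree_cmod[OF M, of "b^M"] M by (simp add: cmod_def coeff_monom coeff_pCons')
  qed
qed

lemma pcompose_monom1: "pcompose (monom 1 M) q = q ^ M"
  by (induction M) (simp_all add: monom_Suc pcompose_pCons monom_0 one_pCons)

lemma P1L:
  assumes o: "ordr (w::'a::field) M" and M: "M > 0" and L: "L > 0"
  shows "(\<Prod>i<M. monom 1 L - [:b * w ^ i:]) = monom 1 (L * M) - [:b ^ M:]"
proof -
  have "pcompose (\<Prod>i<M. [:- (b * w ^ i), 1:]) (monom 1 L) = pcompose (monom 1 M - [:b ^ M:]) (monom 1 L)"
    by (simp add: P1[OF o M])
  moreover have "pcompose [:- a, 1:] (monom 1 L) = monom 1 L - [:a:]" for a :: 'a
    by (simp add: pcompose_pCons one_pCons)
  ultimately show ?thesis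
    by (simp add: pcompose_prod pcompose_diff pcompose_monom1 monom_power)
qed

lemma P1L':
  assumes o: "ordr (w::'a::field) M" and M: "M > 0" and L: "L > 0"
  shows "(\<Prod>i\<in>{1..M}. monom 1 L - [:b * w ^ i:]) = monom 1 (L * M) - [:b ^ M:]"
proof -
  have wM: "w ^ M = 1" using o by (simp add: ordr_def)
  have A: "{1..M} = insert M {1..<M}" "{..<M} = insert 0 {1..<M}" using M by auto
  have "(\<Prod>i\<in>{1..M}. monom 1 L - [:b * w ^ i:]) = (\<Prod>i<M. monom 1 L - [:b * w ^ i:])"
    unfolding A by (simp add: wM)
  then show ?thesis using P1L[OF o M L] by simp
qed

lemma S_lemma:
  assumes o: "ordr (w::'a::field) (l ^ s)" and l: "prime l" and s: "s \<ge> 1" and L: "L > 0"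
  shows "(\<Prod>k\<in>{k. 1 \<le> k \<and> k \<le> l ^ s \<and> \<not> l dvd k}. monom 1 L - [:b * w ^ k:])
         * (monom 1 (L * l ^ (s - 1)) - [:b ^ (l ^ (s - 1)):])
       = monom 1 (L * l ^ s) - [:b ^ (l ^ s):]"
proof -
  define K where "K = {k. 1 \<le> k \<and> k \<le> l ^ s \<and> \<not> l dvd k}"
  define J where "J = (\<lambda>k. l * k) ` {1..l ^ (s - 1)}"
  have l0: "l > 0" using l prime_gt_0_nat by blast
  have ls: "l ^ s = l * l ^ (s - 1)" using s by (simp flip: power_Suc)
  have un: "{1..l ^ s} = K \<union> J"
  proof (rule Set.set_eqI, rule iffI)
    fix k assume k: "k \<in> {1..l ^ s}"
    show "k \<in> K \<union> J"
    proof (cases "l dvd k")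
      case True
      then obtain k' where k': "k = l * k'" by blast
      then have "1 \<le> k'" "k' \<le> l ^ (s - 1)" using k ls l0 by (auto simp: Suc_le_eq)
      then show ?thesis using k' by (auto simp: J_def)
    qed (use k in \<open>auto simp: K_def\<close>)
  next
    fix k assume "k \<in> K \<union> J"
    then show "k \<in> {1..l ^ s}"
      by (auto simp: K_def J_def ls l0 Suc_le_eq)
  qed
  have dis: "K \<inter> J = {}" by (auto simp: K_def J_def)
  have o2: "ordr (w ^ l) (l ^ (s - 1))" by (rule ordr_pow_dvd[OF _ l0]) (use o ls in simp)
  have "(\<Prod>k\<in>J. monom 1 L - [:b * w ^ k:]) = (\<Prod>k\<in>{1..l ^ (s - 1)}. monom 1 L - [:b * (w ^ l) ^ k:])"
    unfolding J_def by (subst prod.reindex) (use l0 in \<open>auto simp: inj_on_def power_mult\<close>)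
  also have "\<dots> = monom 1 (L * l ^ (s - 1)) - [:b ^ (l ^ (s - 1)):]"
    by (rule P1L'[OF o2]) (use l0 L in auto)
  finally have PJ: "(\<Prod>k\<in>J. monom 1 L - [:b * w ^ k:]) = monom 1 (L * l ^ (s - 1)) - [:b ^ (l ^ (s - 1)):]" .
  have "(\<Prod>k\<in>{1..l ^ s}. monom 1 L - [:b * w ^ k:]) = monom 1 (L * l ^ s) - [:b ^ (l ^ s):]"
    by (rule P1L'[OF o]) (use l0 L in auto)
  moreover have "(\<Prod>k\<in>{1..l ^ s}. monom 1 L - [:b * w ^ k:]) =
      (\<Prod>k\<in>K. monom 1 L - [:b * w ^ k:]) * (\<Prod>k\<in>J. monom 1 L - [:b * w ^ k:])"
    unfolding un by (rule prod.union_disjoint) (auto simp: K_def J_def dis)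
  ultimately show ?thesis using PJ by (simp add: K_def)
qed



lemma pm_monom: "(monom 1 L - [:a:]) * (monom 1 L + [:a:]) = monom 1 (2 * L) - [:(a::'a::field) ^ 2:]"
proof -
  have sq: "\<And>x y :: 'a poly. (x - y) * (x + y) = x * x - y * y" by (simp add: algebra_simps)
  have "(monom 1 L - [:a:]) * (monom 1 L + [:a:]) = monom 1 L * monom 1 L - [:a:] * [:a:]"
    by (rule sq)
  also have "\<dots> = monom 1 (2 * L) - [:a ^ 2:]"
    by (simp add: mult_monom mult_2 power2_eq_square)
  finally show ?thesis .
qed

lemma pm_lin: "[:- a, 1:] * [:a, 1:] = monom 1 2 - [:(a::'a::field) ^ 2:]"
  by (rule poly_eqI) (simp add: coeff_monom coeff_pCons' power2_eq_square)

lemma tele: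
  fixes w b :: "'a::field"
  assumes o: "ordr w (l ^ u)" and l: "prime l" and u: "u \<ge> 1"
  shows "(monom 1 (2 * l ^ u) - [:b ^ (l ^ u):]) *
    (\<Prod>j\<in>{1..d}. \<Prod>k\<in>{k. 1 \<le> k \<and> k \<le> l ^ u \<and> \<not> l dvd k}. monom 1 (2 * l ^ j) - [:b ^ (l ^ j) * w ^ k:])
    = monom 1 (2 * l ^ (u + d)) - [:b ^ (l ^ (u + d)):]"
proof (induction d)
  case 0 then show ?case by simp
next
  case (Suc d)
  have l0: "l > 0" using l prime_gt_0_nat by blast
  have S: "(\<Prod>k\<in>{k. 1 \<le> k \<and> k \<le> l ^ u \<and> \<not> l dvd k}. monom 1 (2 * l ^ Suc d) - [:b ^ (l ^ Suc d) * w ^ k:])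
       * (monom 1 (2 * l ^ Suc d * l ^ (u - 1)) - [:(b ^ (l ^ Suc d)) ^ (l ^ (u - 1)):])
       = monom 1 (2 * l ^ Suc d * l ^ u) - [:(b ^ (l ^ Suc d)) ^ (l ^ u):]"
    by (rule S_lemma[OF o l u]) (use l0 in simp)
  have e0: "Suc d + (u - 1) = u + d" using u by simp
  have e1: "2 * l ^ Suc d * l ^ (u - 1) = 2 * l ^ (u + d)"
    by (simp only: mult.assoc flip: power_add e0)
  have e2: "(b ^ (l ^ Suc d)) ^ (l ^ (u - 1)) = b ^ (l ^ (u + d))"
    by (simp only: flip: power_mult power_add e0)
  have e3: "2 * l ^ Suc d * l ^ u = 2 * l ^ (u + Suc d)" by (simp add: power_add algebra_simps)
  have e5: "l ^ Suc d * l ^ u = l ^ (u + Suc d)" by (simp add: power_add mult.commute)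
  have e4: "(b ^ (l ^ Suc d)) ^ (l ^ u) = b ^ (l ^ (u + Suc d))"
    by (simp only: e5 flip: power_mult)
  define Pj where "Pj = (\<lambda>j. \<Prod>k\<in>{k. 1 \<le> k \<and> k \<le> l ^ u \<and> \<not> l dvd k}. monom 1 (2 * l ^ j) - [:b ^ (l ^ j) * w ^ k:])"
  have "(\<Prod>j\<in>{1..Suc d}. Pj j) = (\<Prod>j\<in>{1..d}. Pj j) * Pj (Suc d)"
    by (simp add: prod.cl_ivl_Suc)
  then have "(monom 1 (2 * l ^ u) - [:b ^ (l ^ u):]) * (\<Prod>j\<in>{1..Suc d}. Pj j)
     = ((monom 1 (2 * l ^ u) - [:b ^ (l ^ u):]) * (\<Prod>j\<in>{1..d}. Pj j)) * Pj (Suc d)"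
    by (simp add: mult.assoc)
  also have "\<dots> = (monom 1 (2 * l ^ (u + d)) - [:b ^ (l ^ (u + d)):]) * Pj (Suc d)"
    using Suc.IH by (simp add: Pj_def)
  also have "\<dots> = monom 1 (2 * l ^ (u + Suc d)) - [:b ^ (l ^ (u + Suc d)):]"
    using S unfolding e1 e2 e3 e4 Pj_def by (simp add: mult.commute)
  finally show ?case by (simp add: Pj_def)
qed

lemma prod_pair1:
  assumes "\<forall>i\<in>I. e i \<le> P"
  shows "(\<Prod>i\<in>I. f i ^ e i) * (\<Prod>i\<in>I. f i ^ (P - e i)) = (\<Prod>i\<in>I. (f i :: 'b::comm_semiring_1)) ^ P"
proof -
  have "(\<Prod>i\<in>I. f i ^ e i) * (\<Prod>i\<in>I. f i ^ (P - e i)) = (\<Prod>i\<in>I. f i ^ e i * f i ^ (P - e i))"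
    by (simp add: prod.distrib)
  also have "\<dots> = (\<Prod>i\<in>I. f i ^ P)"
    by (rule prod.cong) (use assms in \<open>auto simp flip: power_add\<close>)
  finally show ?thesis by (simp add: prod_power_distrib)
qed

lemma prod_pair2:
  assumes "\<forall>i\<in>I. e i \<le> P \<and> e' i \<le> P"
  shows "(\<Prod>i\<in>I. f i ^ e i * f' i ^ e' i) * (\<Prod>i\<in>I. f i ^ (P - e i) * f' i ^ (P - e' i))
     = (\<Prod>i\<in>I. (f i :: 'b::comm_semiring_1) * f' i) ^ P"
proof -
  have "(\<Prod>i\<in>I. f i ^ e i * f' i ^ e' i) * (\<Prod>i\<in>I. f i ^ (P - e i) * f' i ^ (P - e' i))
     = (\<Prod>i\<in>I. (f i ^ e i * f i ^ (P - e i)) * (f' i ^ e' i * f' i ^ (P - e' i)))"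
    by (simp add: prod.distrib[symmetric] mult_ac)
  also have "\<dots> = (\<Prod>i\<in>I. (f i * f' i) ^ P)"
    by (rule prod.cong) (use assms in \<open>auto simp: power_mult_distrib simp flip: power_add\<close>)
  finally show ?thesis by (simp add: prod_power_distrib)
qed

lemma prod_nested:
  assumes "\<And>j. j \<in> J \<Longrightarrow> F j * G j = H j ^ P"
  shows "(\<Prod>j\<in>J. F j) * (\<Prod>j\<in>J. G j) = (\<Prod>j\<in>J. (H j :: 'b::comm_semiring_1)) ^ P"
  using assms by (simp add: prod.distrib[symmetric] prod_power_distrib)



lemma part1:
  fixes zeta lam c1 :: "'a::{finite,field}"
  assumes N: "N = 2 * l ^ m * p ^ n" and lam: "lam \<noteq> 0"
    and chp: "CHAR('a) = p" and p: "prime p" and podd: "odd p"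
    and l: "prime l" and lodd: "odd l"
    and oz: "ordr zeta (l ^ v)" and z0: "zeta \<noteq> 0" and u1: "u \<ge> 1"
    and v: "v = min m u"
    and c10: "c1 \<noteq> 0" and c1N: "c1 ^ N * lam = 1"
    and b1: "\<forall>i < l ^ v. eps i \<le> p ^ n \<and> ep i \<le> p ^ n"
    and b2: "\<forall>j \<in> {1..m - u}. \<forall>k \<in> {k. 1 \<le> k \<and> k \<le> l ^ v \<and> \<not> l dvd k}.
        tau j k \<le> p ^ n \<and> sig j k \<le> p ^ n"
  shows "dual_code N (gen_ideal N lam
       ((\<Prod>i < l ^ v. [:- (inverse c1 * zeta ^ i), 1:] ^ eps i
                      * [:inverse c1 * zeta ^ i, 1:] ^ ep i) *
        (\<Prod>j \<in> {1..m - u}. \<Prod>k \<in> {k. 1 \<le> k \<and> k \<le> l ^ v \<and> \<not> l dvd k}.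
           (monom 1 (l ^ j) - [:inverse c1 ^ (l ^ j) * zeta ^ k:]) ^ tau j k
         * (monom 1 (l ^ j) + [:inverse c1 ^ (l ^ j) * zeta ^ k:]) ^ sig j k)))
     = gen_ideal N (inverse lam)
       ((\<Prod>i < l ^ v. [:- (c1 * inverse zeta ^ i), 1:] ^ (p ^ n - eps i)
                      * [:c1 * inverse zeta ^ i, 1:] ^ (p ^ n - ep i)) *
        (\<Prod>j \<in> {1..m - u}. \<Prod>k \<in> {k. 1 \<le> k \<and> k \<le> l ^ v \<and> \<not> l dvd k}.
           (monom 1 (l ^ j) - [:c1 ^ (l ^ j) * inverse zeta ^ k:]) ^ (p ^ n - tau j k)
         * (monom 1 (l ^ j) + [:c1 ^ (l ^ j) * inverse zeta ^ k:]) ^ (p ^ n - sig j k)))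
     \<and> constacyclic N (inverse lam) (dual_code N (gen_ideal N lam
       ((\<Prod>i < l ^ v. [:- (inverse c1 * zeta ^ i), 1:] ^ eps i
                      * [:inverse c1 * zeta ^ i, 1:] ^ ep i) *
        (\<Prod>j \<in> {1..m - u}. \<Prod>k \<in> {k. 1 \<le> k \<and> k \<le> l ^ v \<and> \<not> l dvd k}.
           (monom 1 (l ^ j) - [:inverse c1 ^ (l ^ j) * zeta ^ k:]) ^ tau j k
         * (monom 1 (l ^ j) + [:inverse c1 ^ (l ^ j) * zeta ^ k:]) ^ sig j k))))"
proof -
  define P where "P = p ^ n"
  define ic where "ic = inverse c1"
  define K where "K = {k. 1 \<le> k \<and> k \<le> l ^ v \<and> \<not> l dvd k}"
  define J where "J = {1..m - u}"
  define A where "A = (\<lambda>i::nat. [:- (ic * zeta ^ i), 1:])"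
  define B where "B = (\<lambda>i::nat. [:ic * zeta ^ i, 1:])"
  define Cc where "Cc = (\<lambda>j k. monom 1 (l ^ j) - [:ic ^ (l ^ j) * zeta ^ k:])"
  define D where "D = (\<lambda>j k. monom 1 (l ^ j) + [:ic ^ (l ^ j) * zeta ^ k:])"
  define A' where "A' = (\<lambda>i::nat. [:- (c1 * inverse zeta ^ i), 1:])"
  define B' where "B' = (\<lambda>i::nat. [:c1 * inverse zeta ^ i, 1:])"
  define Cc' where "Cc' = (\<lambda>j k. monom 1 (l ^ j) - [:c1 ^ (l ^ j) * inverse zeta ^ k:])"
  define D' where "D' = (\<lambda>j k. monom 1 (l ^ j) + [:c1 ^ (l ^ j) * inverse zeta ^ k:])"
  define g where "g = (\<Prod>i < l ^ v. A i ^ eps i * B i ^ ep i) *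
        (\<Prod>j \<in> J. \<Prod>k \<in> K. Cc j k ^ tau j k * D j k ^ sig j k)"
  define h where "h = (\<Prod>i < l ^ v. A i ^ (P - eps i) * B i ^ (P - ep i)) *
        (\<Prod>j \<in> J. \<Prod>k \<in> K. Cc j k ^ (P - tau j k) * D j k ^ (P - sig j k))"
  define T where "T = (\<Prod>i < l ^ v. A' i ^ (P - eps i) * B' i ^ (P - ep i)) *
        (\<Prod>j \<in> J. \<Prod>k \<in> K. Cc' j k ^ (P - tau j k) * D' j k ^ (P - sig j k))"
  have l0: "l > 0" using l prime_gt_0_nat by blast
  have N0: "N > 0" using N l0 p prime_gt_0_nat by auto
  have ic0: "ic \<noteq> 0" using c10 by (simp add: ic_def)
  have cop: "coprime 2 (l ^ v)" using lodd by simp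
  have oz2: "ordr (zeta ^ 2) (l ^ v)" by (rule ordr_pow_coprime[OF oz cop])
  have AB: "A i * B i = monom 1 2 - [:ic ^ 2 * (zeta ^ 2) ^ i:]" for i
    unfolding A_def B_def pm_lin by (simp add: power_mult_distrib flip: power_mult) (simp add: mult.commute)
  have CD: "Cc j k * D j k = monom 1 (2 * l ^ j) - [:(ic ^ 2) ^ (l ^ j) * (zeta ^ 2) ^ k:]" for j k
    unfolding Cc_def D_def pm_monom by (simp add: power_mult_distrib flip: power_mult) (simp add: mult.commute)
  have I1: "(\<Prod>i < l ^ v. A i * B i) = monom 1 (2 * l ^ v) - [:(ic ^ 2) ^ (l ^ v):]"
    unfolding AB by (rule P1L[OF oz2]) (use l0 in auto)
  have full: "(\<Prod>i < l ^ v. A i * B i) * (\<Prod>j \<in> J. \<Prod>k \<in> K. Cc j k * D j k)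
      = monom 1 (2 * l ^ m) - [:(ic ^ 2) ^ (l ^ m):]"
  proof (cases "m \<le> u")
    case True
    then show ?thesis using I1 v by (simp add: J_def)
  next
    case False
    then have vu: "v = u" using v by simp
    have "(monom 1 (2 * l ^ u) - [:(ic ^ 2) ^ (l ^ u):]) *
      (\<Prod>j\<in>{1..m - u}. \<Prod>k\<in>{k. 1 \<le> k \<and> k \<le> l ^ u \<and> \<not> l dvd k}.
         monom 1 (2 * l ^ j) - [:(ic ^ 2) ^ (l ^ j) * (zeta ^ 2) ^ k:])
      = monom 1 (2 * l ^ (u + (m - u))) - [:(ic ^ 2) ^ (l ^ (u + (m - u))):]"
      by (rule tele) (use oz2 vu l u1 in auto)
    then show ?thesis using I1 False unfolding vu J_def K_def CD by simp
  qed
  have gh: "g * h = cmod N lam"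
  proof -
    have "g * h = ((\<Prod>i < l ^ v. A i ^ eps i * B i ^ ep i) * (\<Prod>i < l ^ v. A i ^ (P - eps i) * B i ^ (P - ep i)))
       * ((\<Prod>j \<in> J. \<Prod>k \<in> K. Cc j k ^ tau j k * D j k ^ sig j k) *
          (\<Prod>j \<in> J. \<Prod>k \<in> K. Cc j k ^ (P - tau j k) * D j k ^ (P - sig j k)))"
      by (simp add: g_def h_def mult_ac)
    also have "\<dots> = (\<Prod>i < l ^ v. A i * B i) ^ P * (\<Prod>j \<in> J. \<Prod>k \<in> K. Cc j k * D j k) ^ P"
    proof -
      have "(\<Prod>i < l ^ v. A i ^ eps i * B i ^ ep i) * (\<Prod>i < l ^ v. A i ^ (P - eps i) * B i ^ (P - ep i))
          = (\<Prod>i < l ^ v. A i * B i) ^ P"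
        by (rule prod_pair2) (use b1 in \<open>auto simp: P_def\<close>)
      moreover have "(\<Prod>j \<in> J. \<Prod>k \<in> K. Cc j k ^ tau j k * D j k ^ sig j k) *
          (\<Prod>j \<in> J. \<Prod>k \<in> K. Cc j k ^ (P - tau j k) * D j k ^ (P - sig j k))
          = (\<Prod>j \<in> J. \<Prod>k \<in> K. Cc j k * D j k) ^ P"
        by (rule prod_nested, rule prod_pair2) (use b2 in \<open>auto simp: P_def J_def K_def\<close>)
      ultimately show ?thesis by simp
    qed
    also have "\<dots> = (monom 1 (2 * l ^ m) - [:(ic ^ 2) ^ (l ^ m):]) ^ P"
      using full by (simp flip: power_mult_distrib)
    also have "\<dots> = monom 1 (2 * l ^ m * p ^ n) - [:((ic ^ 2) ^ (l ^ m)) ^ (p ^ n):]"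
      unfolding P_def by (rule frob_poly[OF chp p podd])
    also have "\<dots> = cmod N lam"
    proof -
      have "lam = inverse (c1 ^ N)" using c1N c10 by (simp add: field_simps)
      also have "\<dots> = ((ic ^ 2) ^ (l ^ m)) ^ (p ^ n)"
        by (simp add: ic_def N power_inverse mult_ac flip: power_mult)
      finally show ?thesis by (simp add: cmod_def N)
    qed
    finally show ?thesis .
  qed
  have rr: "reflrel h T"
  proof -
    have z0': "\<And>i::nat. ic * zeta ^ i \<noteq> 0" using ic0 z0 by simp
    have z0'': "\<And>j k::nat. ic ^ (l ^ j) * zeta ^ k \<noteq> 0" using ic0 z0 by simp
    have rA: "reflrel (A i) (A' i)" for i
      using reflrel_lin_minus[OF z0'[of i]] by (simp add: A_def A'_def ic_def power_inverse mult.commute)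
    have rB: "reflrel (B i) (B' i)" for i
      using reflrel_lin_plus[OF z0'[of i]] by (simp add: B_def B'_def ic_def power_inverse mult.commute)
    have rC: "reflrel (Cc j k) (Cc' j k)" for j k
      using reflrel_monom_minus[OF z0''[of j k], of "l ^ j"] l0
      by (simp add: Cc_def Cc'_def ic_def power_inverse mult.commute)
    have rD: "reflrel (D j k) (D' j k)" for j k
      using reflrel_monom_plus[OF z0''[of j k], of "l ^ j"] l0
      by (simp add: D_def D'_def ic_def power_inverse mult.commute)
    show ?thesis unfolding h_def T_def
      by (intro reflrel_mult reflrel_prod reflrel_power rA rB rC rD)
  qed
  have res: "dual_code N (gen_ideal N lam g) = gen_ideal N (inverse lam) T
     \<and> constacyclic N (inverse lam) (dual_code N (gen_ideal N lam g))"
    by (rule dual_final[OF N0 lam gh rr])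
  show ?thesis using res
    unfolding g_def T_def A_def B_def Cc_def D_def A'_def B'_def Cc'_def D'_def ic_def P_def J_def K_def .
qed

lemma ordr_nz:
  assumes o: "ordr w M" and M: "M > 0"
  shows "w \<noteq> 0"
proof
  assume "w = 0"
  then have "w ^ M = 0" using M by simp
  moreover have "w ^ M = 1" using o by (simp add: ordr_def)
  ultimately show False by simp
qed

lemma part2a:
  fixes alpha xi lam c2 :: "'a::{finite,field}"
  assumes N: "N = 2 * l ^ m * p ^ n" and lam: "lam \<noteq> 0"
    and chp: "CHAR('a) = p" and p: "prime p" and podd: "odd p"
    and l: "prime l"
    and oa: "ordr alpha (l ^ m)" and x0: "xi \<noteq> 0"
    and c20: "c2 \<noteq> 0" and c2N: "c2 ^ N * lam = xi ^ (l ^ m * p ^ n)"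
    and b1: "\<forall>i < l ^ m. eps i \<le> p ^ n"
  shows "dual_code N (gen_ideal N lam
       (\<Prod>i < l ^ m. (monom 1 2 - [:inverse c2 ^ 2 * xi * alpha ^ i:]) ^ eps i))
     = gen_ideal N (inverse lam)
       (\<Prod>i < l ^ m. (monom 1 2 - [:c2 ^ 2 * inverse xi * inverse alpha ^ i:]) ^ (p ^ n - eps i))
     \<and> constacyclic N (inverse lam) (dual_code N (gen_ideal N lam
       (\<Prod>i < l ^ m. (monom 1 2 - [:inverse c2 ^ 2 * xi * alpha ^ i:]) ^ eps i)))"
proof -
  define P where "P = p ^ n"
  define ic where "ic = inverse c2"
  define A where "A = (\<lambda>i::nat. monom 1 2 - [:ic ^ 2 * xi * alpha ^ i:])"
  define A' where "A' = (\<lambda>i::nat. monom 1 2 - [:c2 ^ 2 * inverse xi * inverse alpha ^ i:])"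
  define g where "g = (\<Prod>i < l ^ m. A i ^ eps i)"
  define h where "h = (\<Prod>i < l ^ m. A i ^ (P - eps i))"
  define T where "T = (\<Prod>i < l ^ m. A' i ^ (P - eps i))"
  have l0: "l > 0" using l prime_gt_0_nat by blast
  have N0: "N > 0" using N l0 p prime_gt_0_nat by auto
  have ic0: "ic \<noteq> 0" using c20 by (simp add: ic_def)
  have a0: "alpha \<noteq> 0" by (rule ordr_nz[OF oa]) (use l0 in simp)
  have full: "(\<Prod>i < l ^ m. A i) = monom 1 (2 * l ^ m) - [:(ic ^ 2 * xi) ^ (l ^ m):]"
    unfolding A_def by (rule P1L[OF oa]) (use l0 in auto)
  have gh: "g * h = cmod N lam"
  proof -
    have "g * h = (\<Prod>i < l ^ m. A i) ^ P"
      unfolding g_def h_def by (rule prod_pair1) (use b1 in \<open>auto simp: P_def\<close>)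
    also have "\<dots> = monom 1 (2 * l ^ m * p ^ n) - [:((ic ^ 2 * xi) ^ (l ^ m)) ^ (p ^ n):]"
      unfolding full P_def by (rule frob_poly[OF chp p podd])
    also have "\<dots> = cmod N lam"
    proof -
      have "lam = inverse (c2 ^ N) * xi ^ (l ^ m * p ^ n)" using c2N c20 by (simp add: field_simps)
      also have "\<dots> = ((ic ^ 2 * xi) ^ (l ^ m)) ^ (p ^ n)"
        by (simp add: ic_def N power_inverse power_mult_distrib mult_ac flip: power_mult)
      finally show ?thesis by (simp add: cmod_def N)
    qed
    finally show ?thesis .
  qed
  have rr: "reflrel h T"
  proof -
    have rA: "reflrel (A i) (A' i)" for i
      using reflrel_monom_minus[of "ic ^ 2 * xi * alpha ^ i" 2] ic0 x0 a0
      by (simp add: A_def A'_def ic_def power_inverse)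
    show ?thesis unfolding h_def T_def
      by (intro reflrel_prod reflrel_power rA)
  qed
  have res: "dual_code N (gen_ideal N lam g) = gen_ideal N (inverse lam) T
     \<and> constacyclic N (inverse lam) (dual_code N (gen_ideal N lam g))"
    by (rule dual_final[OF N0 lam gh rr])
  show ?thesis using res
    unfolding g_def T_def A_def A'_def ic_def P_def .
qed

lemma part2b:
  fixes zeta xi lam c2 beta :: "'a::{finite,field}"
  assumes N: "N = 2 * l ^ m * p ^ n" and lam: "lam \<noteq> 0"
    and chp: "CHAR('a) = p" and p: "prime p" and podd: "odd p"
    and l: "prime l"
    and oz: "ordr zeta (l ^ u)" and x0: "xi \<noteq> 0" and u1: "u \<ge> 1" and mu: "m > u"
    and c20: "c2 \<noteq> 0" and c2N: "c2 ^ N * lam = xi ^ (l ^ u * p ^ n)"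
    and bet: "beta ^ (l ^ m) * xi ^ (l ^ u) = 1"
    and b1: "\<forall>i < l ^ u. eps i \<le> p ^ n"
    and b2: "\<forall>j \<in> {1..m - u}. \<forall>k \<in> {k. 1 \<le> k \<and> k \<le> l ^ u \<and> \<not> l dvd k}. sig j k \<le> p ^ n"
  shows "dual_code N (gen_ideal N lam
       ((\<Prod>i < l ^ u. (monom 1 2 - [:inverse c2 ^ 2 * inverse beta * zeta ^ i:]) ^ eps i) *
        (\<Prod>j \<in> {1..m - u}. \<Prod>k \<in> {k. 1 \<le> k \<and> k \<le> l ^ u \<and> \<not> l dvd k}.
           (monom 1 (2 * l ^ j) - [:inverse c2 ^ (2 * l ^ j) * inverse beta ^ (l ^ j) * zeta ^ k:])
             ^ sig j k)))
     = gen_ideal N (inverse lam)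
       ((\<Prod>i < l ^ u. (monom 1 2 - [:c2 ^ 2 * beta * inverse zeta ^ i:]) ^ (p ^ n - eps i)) *
        (\<Prod>j \<in> {1..m - u}. \<Prod>k \<in> {k. 1 \<le> k \<and> k \<le> l ^ u \<and> \<not> l dvd k}.
           (monom 1 (2 * l ^ j) - [:c2 ^ (2 * l ^ j) * beta ^ (l ^ j) * inverse zeta ^ k:])
             ^ (p ^ n - sig j k)))
     \<and> constacyclic N (inverse lam) (dual_code N (gen_ideal N lam
       ((\<Prod>i < l ^ u. (monom 1 2 - [:inverse c2 ^ 2 * inverse beta * zeta ^ i:]) ^ eps i) *
        (\<Prod>j \<in> {1..m - u}. \<Prod>k \<in> {k. 1 \<le> k \<and> k \<le> l ^ u \<and> \<not> l dvd k}.
           (monom 1 (2 * l ^ j) - [:inverse c2 ^ (2 * l ^ j) * inverse beta ^ (l ^ j) * zeta ^ k:])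
             ^ sig j k))))"
proof -
  define P where "P = p ^ n"
  define ic where "ic = inverse c2"
  define ib where "ib = inverse beta"
  define K where "K = {k. 1 \<le> k \<and> k \<le> l ^ u \<and> \<not> l dvd k}"
  define J where "J = {1..m - u}"
  define A where "A = (\<lambda>i::nat. monom 1 2 - [:ic ^ 2 * ib * zeta ^ i:])"
  define Cc where "Cc = (\<lambda>j k. monom 1 (2 * l ^ j) - [:ic ^ (2 * l ^ j) * ib ^ (l ^ j) * zeta ^ k:])"
  define A' where "A' = (\<lambda>i::nat. monom 1 2 - [:c2 ^ 2 * beta * inverse zeta ^ i:])"
  define Cc' where "Cc' = (\<lambda>j k. monom 1 (2 * l ^ j) - [:c2 ^ (2 * l ^ j) * beta ^ (l ^ j) * inverse zeta ^ k:])"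
  define g where "g = (\<Prod>i < l ^ u. A i ^ eps i) * (\<Prod>j \<in> J. \<Prod>k \<in> K. Cc j k ^ sig j k)"
  define h where "h = (\<Prod>i < l ^ u. A i ^ (P - eps i)) * (\<Prod>j \<in> J. \<Prod>k \<in> K. Cc j k ^ (P - sig j k))"
  define T where "T = (\<Prod>i < l ^ u. A' i ^ (P - eps i)) * (\<Prod>j \<in> J. \<Prod>k \<in> K. Cc' j k ^ (P - sig j k))"
  define b where "b = ic ^ 2 * ib"
  have l0: "l > 0" using l prime_gt_0_nat by blast
  have N0: "N > 0" using N l0 p prime_gt_0_nat by auto
  have ic0: "ic \<noteq> 0" using c20 by (simp add: ic_def)
  have be0: "beta \<noteq> 0" using bet l0 by (auto simp: power_0_left)
  have ib0: "ib \<noteq> 0" using be0 by (simp add: ib_def)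
  have z0: "zeta \<noteq> 0" by (rule ordr_nz[OF oz]) (use l0 in simp)
  have Ab: "A i = monom 1 2 - [:b * zeta ^ i:]" for i by (simp add: A_def b_def)
  have Cb: "Cc j k = monom 1 (2 * l ^ j) - [:b ^ (l ^ j) * zeta ^ k:]" for j k
    by (simp add: Cc_def b_def power_mult_distrib flip: power_mult)
  have I1: "(\<Prod>i < l ^ u. A i) = monom 1 (2 * l ^ u) - [:b ^ (l ^ u):]"
    unfolding Ab by (rule P1L[OF oz]) (use l0 in auto)
  have full: "(\<Prod>i < l ^ u. A i) * (\<Prod>j \<in> J. \<Prod>k \<in> K. Cc j k)
      = monom 1 (2 * l ^ m) - [:b ^ (l ^ m):]"
  proof -
    have "(monom 1 (2 * l ^ u) - [:b ^ (l ^ u):]) *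
      (\<Prod>j\<in>{1..m - u}. \<Prod>k\<in>{k. 1 \<le> k \<and> k \<le> l ^ u \<and> \<not> l dvd k}.
         monom 1 (2 * l ^ j) - [:b ^ (l ^ j) * zeta ^ k:])
      = monom 1 (2 * l ^ (u + (m - u))) - [:b ^ (l ^ (u + (m - u))):]"
      by (rule tele[OF oz l u1])
    then show ?thesis using I1 mu unfolding J_def K_def Cb by simp
  qed
  have gh: "g * h = cmod N lam"
  proof -
    have "g * h = ((\<Prod>i < l ^ u. A i ^ eps i) * (\<Prod>i < l ^ u. A i ^ (P - eps i)))
       * ((\<Prod>j \<in> J. \<Prod>k \<in> K. Cc j k ^ sig j k) * (\<Prod>j \<in> J. \<Prod>k \<in> K. Cc j k ^ (P - sig j k)))"
      by (simp add: g_def h_def mult_ac)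
    also have "\<dots> = (\<Prod>i < l ^ u. A i) ^ P * (\<Prod>j \<in> J. \<Prod>k \<in> K. Cc j k) ^ P"
    proof -
      have "(\<Prod>i < l ^ u. A i ^ eps i) * (\<Prod>i < l ^ u. A i ^ (P - eps i)) = (\<Prod>i < l ^ u. A i) ^ P"
        by (rule prod_pair1) (use b1 in \<open>auto simp: P_def\<close>)
      moreover have "(\<Prod>j \<in> J. \<Prod>k \<in> K. Cc j k ^ sig j k) * (\<Prod>j \<in> J. \<Prod>k \<in> K. Cc j k ^ (P - sig j k))
          = (\<Prod>j \<in> J. \<Prod>k \<in> K. Cc j k) ^ P"
        by (rule prod_nested, rule prod_pair1) (use b2 in \<open>auto simp: P_def J_def K_def\<close>)
      ultimately show ?thesis by simp
    qed
    also have "\<dots> = (monom 1 (2 * l ^ m) - [:b ^ (l ^ m):]) ^ P"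
      using full by (simp flip: power_mult_distrib)
    also have "\<dots> = monom 1 (2 * l ^ m * p ^ n) - [:(b ^ (l ^ m)) ^ (p ^ n):]"
      unfolding P_def by (rule frob_poly[OF chp p podd])
    also have "\<dots> = cmod N lam"
    proof -
      have ibx: "ib ^ (l ^ m) = xi ^ (l ^ u)" using bet be0
        by (simp add: ib_def power_inverse field_simps)
      have "lam = inverse (c2 ^ N) * xi ^ (l ^ u * p ^ n)" using c2N c20 by (simp add: field_simps)
      also have "\<dots> = (ic ^ (2 * l ^ m) * ib ^ (l ^ m)) ^ (p ^ n)"
        unfolding ibx by (simp add: ic_def N power_inverse power_mult_distrib mult_ac flip: power_mult)
      also have "\<dots> = (b ^ (l ^ m)) ^ (p ^ n)"
        by (simp add: b_def power_mult_distrib flip: power_mult)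
      finally show ?thesis by (simp add: cmod_def N)
    qed
    finally show ?thesis .
  qed
  have rr: "reflrel h T"
  proof -
    have rA: "reflrel (A i) (A' i)" for i
      using reflrel_monom_minus[of "ic ^ 2 * ib * zeta ^ i" 2] ic0 ib0 z0
      by (simp add: A_def A'_def ic_def ib_def power_inverse)
    have rC: "reflrel (Cc j k) (Cc' j k)" for j k
      using reflrel_monom_minus[of "ic ^ (2 * l ^ j) * ib ^ (l ^ j) * zeta ^ k" "2 * l ^ j"] ic0 ib0 z0 l0
      by (simp add: Cc_def Cc'_def ic_def ib_def power_inverse)
    show ?thesis unfolding h_def T_def
      by (intro reflrel_mult reflrel_prod reflrel_power rA rC)
  qed
  have res: "dual_code N (gen_ideal N lam g) = gen_ideal N (inverse lam) T
     \<and> constacyclic N (inverse lam) (dual_code N (gen_ideal N lam g))"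
    by (rule dual_final[OF N0 lam gh rr])
  show ?thesis using res
    unfolding g_def T_def A_def Cc_def A'_def Cc'_def ic_def ib_def P_def J_def K_def .
qed

lemma part3a:
  fixes delta xi lam d1 :: "'a::{finite,field}"
  assumes N: "N = 2 * l ^ m * p ^ n" and lam: "lam \<noteq> 0"
    and chp: "CHAR('a) = p" and p: "prime p" and podd: "odd p"
    and l: "prime l" and zm: "z \<le> m"
    and od: "ordr delta (l ^ z)" and x0: "xi \<noteq> 0"
    and d10: "d1 \<noteq> 0" and dN: "d1 ^ N * lam = xi ^ (jj * p ^ n)" and jj: "jj = y * l ^ z"
    and b1: "\<forall>i < l ^ z. eps i \<le> p ^ n"
  shows "dual_code N (gen_ideal N lam
       (\<Prod>i < l ^ z. (monom 1 (2 * l ^ (m - z))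
                        - [:inverse d1 ^ (2 * l ^ (m - z)) * delta ^ i * xi ^ y:]) ^ eps i))
     = gen_ideal N (inverse lam)
       (\<Prod>i < l ^ z. (monom 1 (2 * l ^ (m - z))
                        - [:d1 ^ (2 * l ^ (m - z)) * inverse delta ^ i * inverse xi ^ y:])
                      ^ (p ^ n - eps i))
     \<and> constacyclic N (inverse lam) (dual_code N (gen_ideal N lam
       (\<Prod>i < l ^ z. (monom 1 (2 * l ^ (m - z))
                        - [:inverse d1 ^ (2 * l ^ (m - z)) * delta ^ i * xi ^ y:]) ^ eps i)))"
proof -
  define P where "P = p ^ n"
  define ic where "ic = inverse d1"
  define L where "L = 2 * l ^ (m - z)"
  define A where "A = (\<lambda>i::nat. monom 1 L - [:ic ^ L * delta ^ i * xi ^ y:])"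
  define A' where "A' = (\<lambda>i::nat. monom 1 L - [:d1 ^ L * inverse delta ^ i * inverse xi ^ y:])"
  define g where "g = (\<Prod>i < l ^ z. A i ^ eps i)"
  define h where "h = (\<Prod>i < l ^ z. A i ^ (P - eps i))"
  define T where "T = (\<Prod>i < l ^ z. A' i ^ (P - eps i))"
  define b where "b = ic ^ L * xi ^ y"
  have l0: "l > 0" using l prime_gt_0_nat by blast
  have L0: "L > 0" using l0 by (simp add: L_def)
  have N0: "N > 0" using N l0 p prime_gt_0_nat by auto
  have ic0: "ic \<noteq> 0" using d10 by (simp add: ic_def)
  have de0: "delta \<noteq> 0" by (rule ordr_nz[OF od]) (use l0 in simp)
  have LL: "L * l ^ z = 2 * l ^ m" using zm by (simp add: L_def mult.assoc flip: power_add)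
  have full: "(\<Prod>i < l ^ z. A i) = monom 1 (2 * l ^ m) - [:b ^ (l ^ z):]"
  proof -
    have "(\<Prod>i < l ^ z. monom 1 L - [:b * delta ^ i:]) = monom 1 (L * l ^ z) - [:b ^ (l ^ z):]"
      by (rule P1L[OF od]) (use l0 L0 in auto)
    then show ?thesis unfolding LL by (simp add: A_def b_def mult_ac)
  qed
  have gh: "g * h = cmod N lam"
  proof -
    have "g * h = (\<Prod>i < l ^ z. A i) ^ P"
      unfolding g_def h_def by (rule prod_pair1) (use b1 in \<open>auto simp: P_def\<close>)
    also have "\<dots> = monom 1 (2 * l ^ m * p ^ n) - [:(b ^ (l ^ z)) ^ (p ^ n):]"
      unfolding full P_def by (rule frob_poly[OF chp p podd])
    also have "\<dots> = cmod N lam"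
    proof -
      have "lam = inverse (d1 ^ N) * xi ^ (jj * p ^ n)" using dN d10 by (simp add: field_simps)
      also have "\<dots> = (ic ^ (L * l ^ z) * xi ^ (y * l ^ z)) ^ (p ^ n)"
        unfolding LL jj by (simp add: ic_def N power_inverse power_mult_distrib mult_ac flip: power_mult)
      also have "\<dots> = (b ^ (l ^ z)) ^ (p ^ n)"
        by (simp add: b_def power_mult_distrib flip: power_mult)
      finally show ?thesis by (simp add: cmod_def N)
    qed
    finally show ?thesis .
  qed
  have rr: "reflrel h T"
  proof -
    have rA: "reflrel (A i) (A' i)" for i
      using reflrel_monom_minus[of "ic ^ L * delta ^ i * xi ^ y" L] ic0 x0 de0 L0
      by (simp add: A_def A'_def ic_def power_inverse)
    show ?thesis unfolding h_def T_def
      by (intro reflrel_prod reflrel_power rA)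
  qed
  have res: "dual_code N (gen_ideal N lam g) = gen_ideal N (inverse lam) T
     \<and> constacyclic N (inverse lam) (dual_code N (gen_ideal N lam g))"
    by (rule dual_final[OF N0 lam gh rr])
  show ?thesis using res
    unfolding g_def T_def A_def A'_def ic_def P_def L_def .
qed

lemma part3b:
  fixes delta xi lam d1 :: "'a::{finite,field}"
  assumes N: "N = 2 * l ^ m * p ^ n" and lam: "lam \<noteq> 0"
    and chp: "CHAR('a) = p" and p: "prime p" and podd: "odd p"
    and l: "prime l" and lodd: "odd l" and zm: "z \<le> m"
    and od: "ordr delta (l ^ z)" and x0: "xi \<noteq> 0"
    and d10: "d1 \<noteq> 0" and dN: "d1 ^ N * lam = xi ^ (jj * p ^ n)" and jj: "jj = y * l ^ z"
    and y: "y = 2 * y0"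
    and b1: "\<forall>i < l ^ z. eps i \<le> p ^ n \<and> ep i \<le> p ^ n"
  shows "dual_code N (gen_ideal N lam
       (\<Prod>i < l ^ z. (monom 1 (l ^ (m - z))
                        - [:inverse d1 ^ (l ^ (m - z)) * delta ^ i * xi ^ y0:]) ^ eps i
                    * (monom 1 (l ^ (m - z))
                        + [:inverse d1 ^ (l ^ (m - z)) * delta ^ i * xi ^ y0:]) ^ ep i))
     = gen_ideal N (inverse lam)
       (\<Prod>i < l ^ z. (monom 1 (l ^ (m - z))
                        - [:d1 ^ (l ^ (m - z)) * inverse delta ^ i * inverse xi ^ y0:]) ^ (p ^ n - eps i)
                    * (monom 1 (l ^ (m - z))
                        + [:d1 ^ (l ^ (m - z)) * inverse delta ^ i * inverse xi ^ y0:]) ^ (p ^ n - ep i))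
     \<and> constacyclic N (inverse lam) (dual_code N (gen_ideal N lam
       (\<Prod>i < l ^ z. (monom 1 (l ^ (m - z))
                        - [:inverse d1 ^ (l ^ (m - z)) * delta ^ i * xi ^ y0:]) ^ eps i
                    * (monom 1 (l ^ (m - z))
                        + [:inverse d1 ^ (l ^ (m - z)) * delta ^ i * xi ^ y0:]) ^ ep i)))"
proof -
  define P where "P = p ^ n"
  define ic where "ic = inverse d1"
  define L where "L = l ^ (m - z)"
  define A where "A = (\<lambda>i::nat. monom 1 L - [:ic ^ L * delta ^ i * xi ^ y0:])"
  define B where "B = (\<lambda>i::nat. monom 1 L + [:ic ^ L * delta ^ i * xi ^ y0:])"
  define A' where "A' = (\<lambda>i::nat. monom 1 L - [:d1 ^ L * inverse delta ^ i * inverse xi ^ y0:])"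
  define B' where "B' = (\<lambda>i::nat. monom 1 L + [:d1 ^ L * inverse delta ^ i * inverse xi ^ y0:])"
  define g where "g = (\<Prod>i < l ^ z. A i ^ eps i * B i ^ ep i)"
  define h where "h = (\<Prod>i < l ^ z. A i ^ (P - eps i) * B i ^ (P - ep i))"
  define T where "T = (\<Prod>i < l ^ z. A' i ^ (P - eps i) * B' i ^ (P - ep i))"
  define b where "b = (ic ^ L * xi ^ y0) ^ 2"
  have l0: "l > 0" using l prime_gt_0_nat by blast
  have L0: "L > 0" using l0 by (simp add: L_def)
  have N0: "N > 0" using N l0 p prime_gt_0_nat by auto
  have ic0: "ic \<noteq> 0" using d10 by (simp add: ic_def)
  have de0: "delta \<noteq> 0" by (rule ordr_nz[OF od]) (use l0 in simp)
  have cop: "coprime 2 (l ^ z)" using lodd by simp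
  have od2: "ordr (delta ^ 2) (l ^ z)" by (rule ordr_pow_coprime[OF od cop])
  have LL: "2 * L * l ^ z = 2 * l ^ m" using zm by (simp add: L_def mult.assoc flip: power_add)
  have AB: "A i * B i = monom 1 (2 * L) - [:b * (delta ^ 2) ^ i:]" for i
    unfolding A_def B_def pm_monom b_def by (simp add: power_mult_distrib mult_ac flip: power_mult)
  have full: "(\<Prod>i < l ^ z. A i * B i) = monom 1 (2 * l ^ m) - [:b ^ (l ^ z):]"
  proof -
    have "(\<Prod>i < l ^ z. monom 1 (2 * L) - [:b * (delta ^ 2) ^ i:]) = monom 1 (2 * L * l ^ z) - [:b ^ (l ^ z):]"
      by (rule P1L[OF od2]) (use l0 L0 in auto)
    then show ?thesis unfolding LL AB .
  qed
  have gh: "g * h = cmod N lam"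
  proof -
    have "g * h = (\<Prod>i < l ^ z. A i * B i) ^ P"
      unfolding g_def h_def by (rule prod_pair2) (use b1 in \<open>auto simp: P_def\<close>)
    also have "\<dots> = monom 1 (2 * l ^ m * p ^ n) - [:(b ^ (l ^ z)) ^ (p ^ n):]"
      unfolding full P_def by (rule frob_poly[OF chp p podd])
    also have "\<dots> = cmod N lam"
    proof -
      have "lam = inverse (d1 ^ N) * xi ^ (jj * p ^ n)" using dN d10 by (simp add: field_simps)
      also have "\<dots> = (ic ^ (2 * L * l ^ z) * xi ^ (y * l ^ z)) ^ (p ^ n)"
        unfolding LL jj by (simp add: ic_def N power_inverse power_mult_distrib mult_ac flip: power_mult)
      also have "\<dots> = (b ^ (l ^ z)) ^ (p ^ n)"
        by (simp add: b_def y power_mult_distrib mult_ac flip: power_mult)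
      finally show ?thesis by (simp add: cmod_def N)
    qed
    finally show ?thesis .
  qed
  have rr: "reflrel h T"
  proof -
    have rA: "reflrel (A i) (A' i)" for i
      using reflrel_monom_minus[of "ic ^ L * delta ^ i * xi ^ y0" L] ic0 x0 de0 L0
      by (simp add: A_def A'_def ic_def power_inverse)
    have rB: "reflrel (B i) (B' i)" for i
      using reflrel_monom_plus[of "ic ^ L * delta ^ i * xi ^ y0" L] ic0 x0 de0 L0
      by (simp add: B_def B'_def ic_def power_inverse)
    show ?thesis unfolding h_def T_def
      by (intro reflrel_prod reflrel_mult reflrel_power rA rB)
  qed
  have res: "dual_code N (gen_ideal N lam g) = gen_ideal N (inverse lam) T
     \<and> constacyclic N (inverse lam) (dual_code N (gen_ideal N lam g))"
    by (rule dual_final[OF N0 lam gh rr])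
  show ?thesis using res
    unfolding g_def T_def A_def B_def A'_def B'_def ic_def P_def L_def .
qed

theorem corollary4p2:
  fixes p q l m n u v N :: nat
    and xi zeta lam :: "'a::{finite,field}"
  assumes p_prime: "prime p" and p_odd: "odd p"
    and q_card: "q = CARD('a)" and q_pow: "\<exists>r. q = p ^ r"
    and xi_gen: "is_generator xi"
    and l_prime: "prime l" and l_odd: "odd l" and l_ne_p: "l \<noteq> p"
    and l_dvd: "l dvd (q - 1)"
    and m_pos: "m \<ge> 1" and n_pos: "n \<ge> 1"
    and u_def: "u = multiplicity l (q - 1)"
    and v_def: "v = min m u"
    and zeta_def: "zeta = xi ^ ((q - 1) div l ^ v)"
    and N_def: "N = 2 * l ^ m * p ^ n"
    and lam_nz: "lam \<noteq> 0"
  shows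
  \<comment> \<open>(I)\<close>
  "(\<forall>(C :: 'a poly set) (c1 :: 'a) (eps :: nat \<Rightarrow> nat) (ep :: nat \<Rightarrow> nat)
       (tau :: nat \<Rightarrow> nat \<Rightarrow> nat) (sig :: nat \<Rightarrow> nat \<Rightarrow> nat).
     c1 \<noteq> 0 \<and> c1 ^ N * lam = 1 \<and>
     (\<forall>i < l ^ v. eps i \<le> p ^ n \<and> ep i \<le> p ^ n) \<and>
     (\<forall>j \<in> {1..m - u}. \<forall>k \<in> {k. 1 \<le> k \<and> k \<le> l ^ v \<and> \<not> l dvd k}.
        tau j k \<le> p ^ n \<and> sig j k \<le> p ^ n) \<and>
     C = gen_ideal N lam
       ((\<Prod>i < l ^ v. [:- (inverse c1 * zeta ^ i), 1:] ^ eps i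
                      * [:inverse c1 * zeta ^ i, 1:] ^ ep i) *
        (\<Prod>j \<in> {1..m - u}. \<Prod>k \<in> {k. 1 \<le> k \<and> k \<le> l ^ v \<and> \<not> l dvd k}.
           (monom 1 (l ^ j) - [:inverse c1 ^ (l ^ j) * zeta ^ k:]) ^ tau j k
         * (monom 1 (l ^ j) + [:inverse c1 ^ (l ^ j) * zeta ^ k:]) ^ sig j k))
     \<longrightarrow>
     dual_code N C = gen_ideal N (inverse lam)
       ((\<Prod>i < l ^ v. [:- (c1 * inverse zeta ^ i), 1:] ^ (p ^ n - eps i)
                      * [:c1 * inverse zeta ^ i, 1:] ^ (p ^ n - ep i)) *
        (\<Prod>j \<in> {1..m - u}. \<Prod>k \<in> {k. 1 \<le> k \<and> k \<le> l ^ v \<and> \<not> l dvd k}.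
           (monom 1 (l ^ j) - [:c1 ^ (l ^ j) * inverse zeta ^ k:]) ^ (p ^ n - tau j k)
         * (monom 1 (l ^ j) + [:c1 ^ (l ^ j) * inverse zeta ^ k:]) ^ (p ^ n - sig j k)))
     \<and> constacyclic N (inverse lam) (dual_code N C))
  \<and>
  \<comment> \<open>(II.A)\<close>
  (\<forall>(C :: 'a poly set) (c2 :: 'a) (alpha :: 'a) (eps :: nat \<Rightarrow> nat).
     m \<le> u \<and> c2 \<noteq> 0 \<and> c2 ^ N * lam = xi ^ (l ^ v * p ^ n) \<and>
     alpha = xi ^ ((q - 1) div l ^ m) \<and>
     (\<forall>i < l ^ m. eps i \<le> p ^ n) \<and>
     C = gen_ideal N lam
       (\<Prod>i < l ^ m. (monom 1 2 - [:inverse c2 ^ 2 * xi * alpha ^ i:]) ^ eps i)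
     \<longrightarrow>
     dual_code N C = gen_ideal N (inverse lam)
       (\<Prod>i < l ^ m. (monom 1 2 - [:c2 ^ 2 * inverse xi * inverse alpha ^ i:]) ^ (p ^ n - eps i))
     \<and> constacyclic N (inverse lam) (dual_code N C))
  \<and>
  \<comment> \<open>(II.B)\<close>
  (\<forall>(C :: 'a poly set) (c2 :: 'a) (beta :: 'a) (eps :: nat \<Rightarrow> nat)
       (sig :: nat \<Rightarrow> nat \<Rightarrow> nat).
     m > u \<and> c2 \<noteq> 0 \<and> c2 ^ N * lam = xi ^ (l ^ v * p ^ n) \<and>
     beta \<in> {(xi ^ (l ^ u)) ^ k | k :: nat. True} \<and> beta ^ (l ^ m) * xi ^ (l ^ u) = 1 \<and>
     (\<forall>i < l ^ u. eps i \<le> p ^ n) \<and>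
     (\<forall>j \<in> {1..m - u}. \<forall>k \<in> {k. 1 \<le> k \<and> k \<le> l ^ u \<and> \<not> l dvd k}. sig j k \<le> p ^ n) \<and>
     C = gen_ideal N lam
       ((\<Prod>i < l ^ u. (monom 1 2 - [:inverse c2 ^ 2 * inverse beta * zeta ^ i:]) ^ eps i) *
        (\<Prod>j \<in> {1..m - u}. \<Prod>k \<in> {k. 1 \<le> k \<and> k \<le> l ^ u \<and> \<not> l dvd k}.
           (monom 1 (2 * l ^ j) - [:inverse c2 ^ (2 * l ^ j) * inverse beta ^ (l ^ j) * zeta ^ k:])
             ^ sig j k))
     \<longrightarrow>
     dual_code N C = gen_ideal N (inverse lam)
       ((\<Prod>i < l ^ u. (monom 1 2 - [:c2 ^ 2 * beta * inverse zeta ^ i:]) ^ (p ^ n - eps i)) *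
        (\<Prod>j \<in> {1..m - u}. \<Prod>k \<in> {k. 1 \<le> k \<and> k \<le> l ^ u \<and> \<not> l dvd k}.
           (monom 1 (2 * l ^ j) - [:c2 ^ (2 * l ^ j) * beta ^ (l ^ j) * inverse zeta ^ k:])
             ^ (p ^ n - sig j k)))
     \<and> constacyclic N (inverse lam) (dual_code N C))
  \<and>
  \<comment> \<open>(III.A)\<close>
  (\<forall>(C :: 'a poly set) (jj :: nat) (d1 :: 'a) (y :: nat) (z :: nat) (delta :: 'a)
       (eps :: nat \<Rightarrow> nat).
     1 \<le> jj \<and> jj \<le> 2 * l ^ v - 1 \<and> jj \<noteq> l ^ v \<and>
     d1 \<noteq> 0 \<and> d1 ^ N * lam = xi ^ (jj * p ^ n) \<and>
     jj = y * l ^ z \<and> gcd y l = 1 \<and> z \<le> v - 1 \<and>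
     delta = xi ^ ((q - 1) div l ^ z) \<and> odd y \<and>
     (\<forall>i < l ^ z. eps i \<le> p ^ n) \<and>
     C = gen_ideal N lam
       (\<Prod>i < l ^ z. (monom 1 (2 * l ^ (m - z))
                        - [:inverse d1 ^ (2 * l ^ (m - z)) * delta ^ i * xi ^ y:]) ^ eps i)
     \<longrightarrow>
     dual_code N C = gen_ideal N (inverse lam)
       (\<Prod>i < l ^ z. (monom 1 (2 * l ^ (m - z))
                        - [:d1 ^ (2 * l ^ (m - z)) * inverse delta ^ i * inverse xi ^ y:])
                      ^ (p ^ n - eps i))
     \<and> constacyclic N (inverse lam) (dual_code N C))
  \<and>
  \<comment> \<open>(III.B)\<close>
  (\<forall>(C :: 'a poly set) (jj :: nat) (d1 :: 'a) (y :: nat) (y0 :: nat) (z :: nat) (delta :: 'a)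
       (eps :: nat \<Rightarrow> nat) (ep :: nat \<Rightarrow> nat).
     1 \<le> jj \<and> jj \<le> 2 * l ^ v - 1 \<and> jj \<noteq> l ^ v \<and>
     d1 \<noteq> 0 \<and> d1 ^ N * lam = xi ^ (jj * p ^ n) \<and>
     jj = y * l ^ z \<and> gcd y l = 1 \<and> z \<le> v - 1 \<and>
     delta = xi ^ ((q - 1) div l ^ z) \<and> y = 2 * y0 \<and>
     (\<forall>i < l ^ z. eps i \<le> p ^ n \<and> ep i \<le> p ^ n) \<and>
     C = gen_ideal N lam
       (\<Prod>i < l ^ z. (monom 1 (l ^ (m - z))
                        - [:inverse d1 ^ (l ^ (m - z)) * delta ^ i * xi ^ y0:]) ^ eps i
                    * (monom 1 (l ^ (m - z))
                        + [:inverse d1 ^ (l ^ (m - z)) * delta ^ i * xi ^ y0:]) ^ ep i)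
     \<longrightarrow>
     dual_code N C = gen_ideal N (inverse lam)
       (\<Prod>i < l ^ z. (monom 1 (l ^ (m - z))
                        - [:d1 ^ (l ^ (m - z)) * inverse delta ^ i * inverse xi ^ y0:]) ^ (p ^ n - eps i)
                    * (monom 1 (l ^ (m - z))
                        + [:d1 ^ (l ^ (m - z)) * inverse delta ^ i * inverse xi ^ y0:]) ^ (p ^ n - ep i))
     \<and> constacyclic N (inverse lam) (dual_code N C))"
proof -
  have xi0: "xi \<noteq> 0" using xi_gen by (simp add: is_generator_def)
  obtain r where r: "q = p ^ r" using q_pow by blast
  have chp: "CHAR('a) = p" using char_eq[OF p_prime, of r, where 'a='a] q_card r by simp
  define Q where "Q = q - 1"
  have "card {0::'a, 1} \<le> CARD('a)" by (rule card_mono) auto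
  then have Qpos: "Q > 0" using q_card by (simp add: Q_def)
  have oxi: "ordr xi Q" using gen_order[OF xi_gen] q_card by (simp add: Q_def)
  have l0: "l > 0" using l_prime prime_gt_0_nat by blast
  have lu: "l ^ u dvd Q" using multiplicity_dvd[of l Q] by (simp add: u_def Q_def)
  have u1: "u \<ge> 1"
  proof -
    have "l ^ 1 dvd Q" using l_dvd by (simp add: Q_def)
    moreover have "\<not> is_unit l" using prime_gt_1_nat[OF l_prime] by simp
    ultimately show ?thesis using multiplicity_geI[of Q l 1] Qpos by (simp add: u_def Q_def)
  qed
  have lv: "l ^ v dvd Q" using lu v_def by (meson dvd_trans le_imp_power_dvd min.cobounded2)
  have oz: "ordr zeta (l ^ v)" using ordr_pow_div[OF oxi lv Qpos] zeta_def by (simp add: Q_def)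
  have z0: "zeta \<noteq> 0" by (rule ordr_nz[OF oz]) (use l0 in simp)
  have oam: "ordr (xi ^ ((q - 1) div l ^ m)) (l ^ m)" if "m \<le> u"
  proof -
    have "l ^ m dvd Q" using lu that by (meson dvd_trans le_imp_power_dvd)
    then show ?thesis using ordr_pow_div[OF oxi _ Qpos] by (simp add: Q_def)
  qed
  have odz: "ordr (xi ^ ((q - 1) div l ^ z)) (l ^ z)" if "z \<le> v - 1" for z
  proof -
    have "z \<le> u" using that v_def by linarith
    then have "l ^ z dvd Q" using lu by (meson dvd_trans le_imp_power_dvd)
    then show ?thesis using ordr_pow_div[OF oxi _ Qpos] by (simp add: Q_def)
  qed
  have vm: "v \<le> m" using v_def by simp
  show ?thesis
    apply (intro conjI)
    subgoal
      apply (intro allI impI)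
      apply (elim conjE)
      apply (rotate_tac -1, erule ssubst)
      apply (rule part1[OF N_def lam_nz chp p_prime p_odd l_prime l_odd oz z0 u1 v_def])
      apply assumption+
      done
    subgoal
      apply (intro allI impI)
      apply (elim conjE)
      apply (rotate_tac -1, erule ssubst)
      apply (rule part2a[OF N_def lam_nz chp p_prime p_odd l_prime _ xi0])
      using oam v_def by auto
    subgoal
      apply (intro allI impI)
      apply (elim conjE)
      apply (rotate_tac -1, erule ssubst)
      apply (rule part2b[OF N_def lam_nz chp p_prime p_odd l_prime _ xi0 u1])
      using oz v_def by auto
    subgoal
      apply (intro allI impI)
      apply (elim conjE)
      apply (rotate_tac -1, erule ssubst)
      apply (rule part3a[OF N_def lam_nz chp p_prime p_odd l_prime])
      using odz vm xi0 by auto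
    subgoal
      apply (intro allI impI)
      apply (elim conjE)
      apply (rotate_tac -1, erule ssubst)
      apply (rule part3b[OF N_def lam_nz chp p_prime p_odd l_prime l_odd])
      using odz vm xi0 by auto
    done
qed


end
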